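(* Fix a partition $[n]=U\sqcup D$ and the associated map $\eta$ from $S_n$ to triangulations of $Q$ described below. Let $x,y\in S_n$ with $x\lessdot y$ (a cover in the weak order). Then the following are equivalent: (i) $\eta(x)=\eta(y)$; (ii) $x$ is obtained from $y$ by a $\bar{2}31\to\bar{2}13$-move or a $31\underline{2}\to13\underline{2}$-move. Furthermore, if $\eta(x)\neq\eta(y)$, then $\eta(x)$ and $\eta(y)$ differ by a diagonal flip, and the slope of the unique diagonal in $\eta(x)$ not in $\eta(y)$ is less than the slope of the unique diagonal in $\eta(y)$ not in $\eta(x)$.
   Context: $S_n$: permutations of $[n]$ in one-line notation $x=x_1\cdots x_n$; weak order $x\le y$ iff $I(x)\subseteq I(y)$, $I(x)=\{(x_j,x_i):i<j,x_i>x_j\}$; $x\lessdot y$ iff $y$ is obtained from $x$ by swapping two adjacent entries $x_j<x_{j+1}$. Indices in $U$ are "up", in $D$ "down". Let $y\in S_n$ and $1\le j\le n-1$ with $y_j>y_{j+1}$, and let $x$ be $y$ with the entries in positions $j,j+1$ swapped. This is a $\bar{2}31\to\bar{2}13$-move if there is $i<j$ with $y_{j+1}<y_i<y_j$ and $y_i\in U$; it is a $31\underline{2}\to13\underline{2}$-move if there is $k>j+1$ with $y_{j+1}<y_k<y_j$ and $y_k\in D$. Let $Q$ be a convex polygon in $\mathbb R^2$ with vertices $v_0,\dots,v_{n+1}$, $x$-coordinates strictly increasing with index, $v_0,v_{n+1}$ on the $x$-axis, $v_i$ above the axis for $i\in U$ and below for $i\in D$; slopes are measured in these coordinates. A diagonal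 is a segment between non-adjacent vertices; a triangulation is a maximal set of non-crossing diagonals; a diagonal flip removes a diagonal from a triangulation and inserts the other diagonal of the resulting quadrilateral. For $x\in S_n$, paths $\lambda_0(x),\dots,\lambda_n(x)$ from $v_0$ to $v_{n+1}$ visit vertices in increasing index: $\lambda_0(x)$ visits $v_0$, all $v_i$ with $i\in D$, and $v_{n+1}$; $\lambda_i(x)$ is $\lambda_{i-1}(x)$ with $v_{x_i}$ deleted if $x_i\in D$, added if $x_i\in U$. $\eta(x)$ is the set of diagonals of $Q$ occurring as edges of some $\lambda_i(x)$ (a triangulation). *)

theory Defs
  imports "HOL-Analysis.Analysis" "HOL-Combinatorics.Permutations"
begin

text \<open>Permutations of [n] in one-line notation: x :: nat => nat with x permutes {1..n};
  x i is the i-th entry.\<close>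

definition weak_cover :: "nat \<Rightarrow> (nat \<Rightarrow> nat) \<Rightarrow> (nat \<Rightarrow> nat) \<Rightarrow> bool" where
  "weak_cover n x y \<longleftrightarrow>
     (\<exists>j. 1 \<le> j \<and> j + 1 \<le> n \<and> x j < x (j+1) \<and> y = x(j := x (j+1), j+1 := x j))"

text \<open>x is obtained from y by a bar2 31 -> bar2 13 move.\<close>
definition move_231 :: "nat \<Rightarrow> nat set \<Rightarrow> (nat \<Rightarrow> nat) \<Rightarrow> (nat \<Rightarrow> nat) \<Rightarrow> bool" where
  "move_231 n U y x \<longleftrightarrow>
     (\<exists>j. 1 \<le> j \<and> j + 1 \<le> n \<and> y j > y (j+1) \<and> x = y(j := y (j+1), j+1 := y j) \<and>
        (\<exists>i. 1 \<le> i \<and> i < j \<and> y (j+1) < y i \<and> y i < y j \<and> y i \<in> U))"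

text \<open>x is obtained from y by a 31 underline2 -> 13 underline2 move.\<close>
definition move_312 :: "nat \<Rightarrow> nat set \<Rightarrow> (nat \<Rightarrow> nat) \<Rightarrow> (nat \<Rightarrow> nat) \<Rightarrow> bool" where
  "move_312 n D y x \<longleftrightarrow>
     (\<exists>j. 1 \<le> j \<and> j + 1 \<le> n \<and> y j > y (j+1) \<and> x = y(j := y (j+1), j+1 := y j) \<and>
        (\<exists>k. j + 1 < k \<and> k \<le> n \<and> y (j+1) < y k \<and> y k < y j \<and> y k \<in> D))"

definition polygon_Q :: "nat \<Rightarrow> nat set \<Rightarrow> nat set \<Rightarrow> (nat \<Rightarrow> real \<times> real) \<Rightarrow> bool" where
  "polygon_Q n U D v \<longleftrightarrow>
     (\<forall>i \<le> n+1. v i extreme_point_of (convex hull (v ` {0..n+1}))) \<and>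
     (\<forall>i j. i < j \<and> j \<le> n+1 \<longrightarrow> fst (v i) < fst (v j)) \<and>
     snd (v 0) = 0 \<and> snd (v (n+1)) = 0 \<and>
     (\<forall>i \<in> U. snd (v i) > 0) \<and> (\<forall>i \<in> D. snd (v i) < 0)"

definition is_diagonal :: "nat \<Rightarrow> (nat \<Rightarrow> real \<times> real) \<Rightarrow> nat \<times> nat \<Rightarrow> bool" where
  "is_diagonal n v d \<longleftrightarrow>
     (case d of (a, b) \<Rightarrow> a < b \<and> b \<le> n+1 \<and>
        \<not> (closed_segment (v a) (v b) face_of convex hull (v ` {0..n+1})))"

definition diag_cross :: "(nat \<Rightarrow> real \<times> real) \<Rightarrow> nat \<times> nat \<Rightarrow> nat \<times> nat \<Rightarrow> bool" where
  "diag_cross v d e \<longleftrightarrow> d \<noteq> e \<and>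
     open_segment (v (fst d)) (v (snd d)) \<inter> open_segment (v (fst e)) (v (snd e)) \<noteq> {}"

definition triangulation :: "nat \<Rightarrow> (nat \<Rightarrow> real \<times> real) \<Rightarrow> (nat \<times> nat) set \<Rightarrow> bool" where
  "triangulation n v T \<longleftrightarrow>
     (\<forall>d \<in> T. is_diagonal n v d) \<and>
     (\<forall>d \<in> T. \<forall>e \<in> T. \<not> diag_cross v d e) \<and>
     (\<forall>d. is_diagonal n v d \<and> d \<notin> T \<longrightarrow> (\<exists>e \<in> T. diag_cross v d e))"

definition diag_flip :: "nat \<Rightarrow> (nat \<Rightarrow> real \<times> real) \<Rightarrow> (nat \<times> nat) set \<Rightarrow> (nat \<times> nat) set \<Rightarrow> bool" where
  "diag_flip n v T T' \<longleftrightarrow> triangulation n v T \<and>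
     (\<exists>d d'. d \<in> T \<and> d' \<notin> T \<and> is_diagonal n v d' \<and>
        (\<forall>e \<in> T - {d}. \<not> diag_cross v d' e) \<and> T' = insert d' (T - {d}))"

definition slope :: "(nat \<Rightarrow> real \<times> real) \<Rightarrow> nat \<times> nat \<Rightarrow> real" where
  "slope v d = (snd (v (snd d)) - snd (v (fst d))) / (fst (v (snd d)) - fst (v (fst d)))"

text \<open>The paths lambda_i(x), as the sets of vertex indices they visit (in increasing order).\<close>
fun lam :: "nat \<Rightarrow> nat set \<Rightarrow> nat set \<Rightarrow> (nat \<Rightarrow> nat) \<Rightarrow> nat \<Rightarrow> nat set" where
  "lam n U D x 0 = {0} \<union> D \<union> {n+1}"
| "lam n U D x (Suc i) =
     (if x (Suc i) \<in> D then lam n U D x i - {x (Suc i)}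
      else if x (Suc i) \<in> U then lam n U D x i \<union> {x (Suc i)}
      else lam n U D x i)"

definition path_edges :: "nat set \<Rightarrow> (nat \<times> nat) set" where
  "path_edges S = {(a, b). a \<in> S \<and> b \<in> S \<and> a < b \<and> (\<forall>c \<in> S. \<not> (a < c \<and> c < b))}"

definition eta :: "nat \<Rightarrow> nat set \<Rightarrow> nat set \<Rightarrow> (nat \<Rightarrow> real \<times> real) \<Rightarrow> (nat \<Rightarrow> nat) \<Rightarrow> (nat \<times> nat) set" where
  "eta n U D v x = {d. is_diagonal n v d \<and> (\<exists>i \<le> n. d \<in> path_edges (lam n U D x i))}"

end

theory Submission
  imports Defs
begin


definition orient :: "real \<times> real \<Rightarrow> real \<times> real \<Rightarrow> real \<times> real \<Rightarrow> real" where
  "orient P Q R = (fst Q - fst P) * (snd R - snd P) - (snd Q - snd P) * (fst R - fst P)"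

lemma orient_cyc: "orient P Q R = orient Q R P"
  unfolding orient_def by (simp add: algebra_simps)
lemma orient_swap: "orient P Q R = - orient Q P R"
  unfolding orient_def by (simp add: algebra_simps)

lemma vert_between:
  fixes P Q X :: "real \<times> real"
  assumes "fst P = fst X" "fst Q = fst X" "snd P < snd X" "snd X < snd Q"
  shows "X \<in> open_segment P Q"
proof -
  define u where "u = (snd X - snd P) / (snd Q - snd P)"
  have nz: "snd Q - snd P > 0" using assms by simp
  have u: "0 < u" "u < 1" using assms nz unfolding u_def by (auto simp: divide_simps)
  have uu: "u * (snd Q - snd P) = snd X - snd P" unfolding u_def using nz by simp
  have "snd X = (1 - u) * snd P + u * snd Q" using uu by (simp add: algebra_simps)
  hence "X = (1 - u) *\<^sub>R P + u *\<^sub>R Q"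
    using assms by (simp add: prod_eq_iff algebra_simps)
  moreover have "P \<noteq> Q" using assms by auto
  ultimately show ?thesis using u unfolding in_segment by blast
qed

lemma seg_point:
  fixes P Q :: "real \<times> real"
  assumes "fst P < t" "t < fst Q"
  obtains R where "R \<in> open_segment P Q" "fst R = t"
    "\<And>X. fst X = t \<Longrightarrow> orient P Q X = (fst Q - fst P) * (snd X - snd R)"
proof -
  define u where "u = (t - fst P) / (fst Q - fst P)"
  define R where "R = (1 - u) *\<^sub>R P + u *\<^sub>R Q"
  have nz: "fst Q - fst P > 0" using assms by simp
  have u: "0 < u" "u < 1" using assms nz unfolding u_def by (auto simp: divide_simps)
  have uu: "u * (fst Q - fst P) = t - fst P" unfolding u_def using nz by simp
  have "P \<noteq> Q" using assms by auto
  hence "R \<in> open_segment P Q" using u unfolding in_segment R_def by blast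
  moreover have "fst R = t" using uu unfolding R_def by (simp add: algebra_simps)
  moreover have "orient P Q X = (fst Q - fst P) * (snd X - snd R)" if "fst X = t" for X
  proof -
    have "(fst Q - fst P) * (snd X - snd R) = (fst Q - fst P) * (snd X - snd P) - (u * (fst Q - fst P)) * (snd Q - snd P)"
      unfolding R_def by (simp add: algebra_simps)
    also have "\<dots> = orient P Q X" unfolding uu orient_def using that by (simp add: algebra_simps)
    finally show ?thesis by simp
  qed
  ultimately show ?thesis using that by blast
qed


lemma orient_aff: "orient A B ((1 - t) *\<^sub>R C + t *\<^sub>R D) = (1 - t) * orient A B C + t * orient A B D"
  unfolding orient_def by (simp add: algebra_simps)

lemma orient_self: "orient A B A = 0" "orient A B B = 0"
  unfolding orient_def by (simp_all add: algebra_simps)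

lemma orient_on_seg: "X \<in> open_segment A B \<Longrightarrow> orient A B X = 0"
  by (auto simp: in_segment orient_aff orient_self)

lemma opp_sign:
  fixes a b t :: real
  assumes "0 < t" "t < 1" "(1 - t) * a + t * b = 0" "a \<noteq> 0"
  shows "a * b < 0"
proof (cases "a > 0")
  case True
  hence "(1 - t) * a > 0" using assms by simp
  hence "t * b < 0" using assms by linarith
  hence "b < 0" using assms by (simp add: mult_less_0_iff)
  thus ?thesis using True by (simp add: mult_pos_neg)
next
  case False
  hence a: "a < 0" using assms by simp
  hence "(1 - t) * a < 0" using assms by (simp add: mult_pos_neg)
  hence "t * b > 0" using assms by linarith
  hence "b > 0" using assms by (simp add: zero_less_mult_iff)
  thus ?thesis using a by (simp add: mult_neg_pos)
qed

lemma shared_end: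
  assumes "orient X B D \<noteq> 0"
  shows "open_segment X B \<inter> open_segment X D = {}"
proof (rule ccontr)
  assume "\<not> ?thesis"
  then obtain p where p: "p \<in> open_segment X B" "p \<in> open_segment X D" by blast
  have "orient X B p = 0" using orient_on_seg[OF p(1)] .
  moreover obtain t where t: "0 < t" "p = (1 - t) *\<^sub>R X + t *\<^sub>R D"
    using p(2) by (auto simp: in_segment)
  ultimately have "t * orient X B D = 0" by (simp add: orient_aff orient_self)
  thus False using t assms by simp
qed

lemma cross_iff:
  assumes nz: "orient A B C \<noteq> 0" "orient A B D \<noteq> 0" "orient C D A \<noteq> 0" "orient C D B \<noteq> 0"
  shows "open_segment A B \<inter> open_segment C D \<noteq> {} \<longleftrightarrow>
    orient A B C * orient A B D < 0 \<and> orient C D A * orient C D B < 0"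
proof
  assume "open_segment A B \<inter> open_segment C D \<noteq> {}"
  then obtain p where p: "p \<in> open_segment A B" "p \<in> open_segment C D" by blast
  obtain t where t: "0 < t" "t < 1" "p = (1 - t) *\<^sub>R C + t *\<^sub>R D"
    using p(2) by (auto simp: in_segment)
  obtain s where s: "0 < s" "s < 1" "p = (1 - s) *\<^sub>R A + s *\<^sub>R B"
    using p(1) by (auto simp: in_segment)
  have "(1 - t) * orient A B C + t * orient A B D = 0"
    using orient_on_seg[OF p(1)] t(3) by (simp add: orient_aff)
  moreover have "(1 - s) * orient C D A + s * orient C D B = 0"
    using orient_on_seg[OF p(2)] s(3) by (simp add: orient_aff)
  ultimately show "orient A B C * orient A B D < 0 \<and> orient C D A * orient C D B < 0"
    using opp_sign t s nz by blast
next
  assume H: "orient A B C * orient A B D < 0 \<and> orient C D A * orient C D B < 0"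
  define al where "al = orient A B C"
  define be where "be = orient A B D"
  define ga where "ga = orient C D A"
  define de where "de = orient C D B"
  define k where "k = be - al"
  have k2: "k = ga - de" unfolding k_def al_def be_def ga_def de_def orient_def
    by (simp add: algebra_simps)
  have ab: "al * be < 0" "ga * de < 0" using H unfolding al_def be_def ga_def de_def by auto
  have kp: "(al < 0 \<and> be > 0 \<and> k > 0) \<or> (al > 0 \<and> be < 0 \<and> k < 0)"
    using ab(1) unfolding k_def by (auto simp: mult_less_0_iff)
  have kp2: "(de < 0 \<and> ga > 0 \<and> k > 0) \<or> (de > 0 \<and> ga < 0 \<and> k < 0)"
    using ab(2) unfolding k2 by (auto simp: mult_less_0_iff)
  define t where "t = - al / k"
  define u where "u = ga / k"
  have knz: "k \<noteq> 0" using kp by auto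
  have t: "0 < t" "t < 1" using kp unfolding t_def k_def by (auto simp: divide_simps)
  have u: "0 < u" "u < 1" using kp2 unfolding u_def k2 by (auto simp: divide_simps)
  have t1: "1 - t = be / k" unfolding t_def using knz unfolding k_def by (simp add: divide_simps)
  have u1: "1 - u = - de / k" unfolding u_def using knz unfolding k2 by (simp add: divide_simps)
  have idt: "be * fst C - al * fst D = ga * fst B - de * fst A"
            "be * snd C - al * snd D = ga * snd B - de * snd A"
    unfolding al_def be_def ga_def de_def orient_def by (simp_all add: algebra_simps)
  have eq: "(1 - t) *\<^sub>R C + t *\<^sub>R D = (1 - u) *\<^sub>R A + u *\<^sub>R B"
  proof -
    have "(1 - t) *\<^sub>R C + t *\<^sub>R D = (be/k) *\<^sub>R C + (- al/k) *\<^sub>R D"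
      by (subst t1, simp add: t_def)
    also have "\<dots> = (1/k) *\<^sub>R ((be * fst C - al * fst D), (be * snd C - al * snd D))"
      using knz by (simp add: prod_eq_iff diff_divide_distrib)
    also have "\<dots> = (1/k) *\<^sub>R ((ga * fst B - de * fst A), (ga * snd B - de * snd A))"
      using idt by simp
    also have "\<dots> = (- de/k) *\<^sub>R A + (ga/k) *\<^sub>R B"
      using knz by (simp add: prod_eq_iff diff_divide_distrib)
    also have "\<dots> = (1 - u) *\<^sub>R A + u *\<^sub>R B"
      by (subst u1, simp add: u_def)
    finally show ?thesis .
  qed
  have "A \<noteq> B" using nz(1) by (auto simp: orient_def)
  hence "(1 - u) *\<^sub>R A + u *\<^sub>R B \<in> open_segment A B" using u by (auto simp: in_segment)
  moreover have "C \<noteq> D" using nz(3) by (auto simp: orient_def)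
  hence "(1 - t) *\<^sub>R C + t *\<^sub>R D \<in> open_segment C D" using t by (auto simp: in_segment)
  ultimately show "open_segment A B \<inter> open_segment C D \<noteq> {}" using eq by auto
qed


locale poly =
  fixes n :: nat and U D :: "nat set" and v :: "nat \<Rightarrow> real \<times> real"
  assumes UD: "U \<union> D = {1..n}" and UDd: "U \<inter> D = {}"
    and Q: "polygon_Q n U D v"
begin

abbreviation "H \<equiv> convex hull (v ` {0..n+1})"

lemma ext: "i \<le> n+1 \<Longrightarrow> v i extreme_point_of H"
  using Q unfolding polygon_Q_def by auto
lemma xmono: "i < j \<Longrightarrow> j \<le> n+1 \<Longrightarrow> fst (v i) < fst (v j)"
  using Q unfolding polygon_Q_def by auto
lemma y0: "snd (v 0) = 0" "snd (v (n+1)) = 0"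
  using Q unfolding polygon_Q_def by auto
lemma yU: "i \<in> U \<Longrightarrow> snd (v i) > 0"
  using Q unfolding polygon_Q_def by auto
lemma yD: "i \<in> D \<Longrightarrow> snd (v i) < 0"
  using Q unfolding polygon_Q_def by auto
lemma inH: "i \<le> n+1 \<Longrightarrow> v i \<in> H"
  by (simp add: hull_inc)
lemma segH: "P \<in> H \<Longrightarrow> Q \<in> H \<Longrightarrow> open_segment P Q \<subseteq> H"
  by (meson convex_contains_open_segment convex_convex_hull)
lemma U_range: "i \<in> U \<Longrightarrow> 1 \<le> i \<and> i \<le> n" using UD by auto
lemma D_range: "i \<in> D \<Longrightarrow> 1 \<le> i \<and> i \<le> n" using UD by auto

lemma not_ext:
  assumes "q \<le> n+1" "A \<in> H" "B \<in> H" "v q \<in> open_segment A B" shows False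
  using ext[OF assms(1)] assms unfolding extreme_point_of_def by blast

lemma G1:
  assumes "p < q" "q < r" "r \<le> n+1"
  shows "q \<in> U \<Longrightarrow> orient (v p) (v r) (v q) > 0"
    and "q \<in> D \<Longrightarrow> orient (v p) (v r) (v q) < 0"
proof -
  have x1: "fst (v p) < fst (v q)" "fst (v q) < fst (v r)"
    using xmono[of p q] xmono[of q r] assms by auto
  obtain R where R: "R \<in> open_segment (v p) (v r)" "fst R = fst (v q)"
    "\<And>X. fst X = fst (v q) \<Longrightarrow> orient (v p) (v r) X = (fst (v r) - fst (v p)) * (snd X - snd R)"
    using seg_point[OF x1] by metis
  have pH: "v p \<in> H" "v r \<in> H" "v q \<in> H" using inH assms by auto
  have RH: "R \<in> H" using R(1) segH[OF pH(1,2)] by blast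
  have dx: "fst (v r) - fst (v p) > 0" using x1 by simp
  have o: "orient (v p) (v r) (v q) = (fst (v r) - fst (v p)) * (snd (v q) - snd R)"
    using R(3)[of "v q"] by simp
  have qr: "q \<le> n+1" using assms by simp
  have x2: "fst (v 0) < fst (v q)" "fst (v q) < fst (v (n+1))" if "1 \<le> q" "q \<le> n"
    using that xmono[of 0 q] xmono[of q "n+1"] by auto
  have zH: "v 0 \<in> H" "v (n+1) \<in> H" using inH by auto
  {
    assume qU: "q \<in> U"
    obtain B where B: "B \<in> open_segment (v 0) (v (n+1))" "fst B = fst (v q)"
      using seg_point[OF x2] U_range[OF qU] by metis
    have BH: "B \<in> H" using B(1) segH[OF zH] by blast
    have By: "snd B = 0" using B(1) y0 by (auto simp: in_segment)
    show "orient (v p) (v r) (v q) > 0"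
    proof (rule ccontr)
      assume "\<not> ?thesis"
      hence le: "snd (v q) \<le> snd R" using o dx mult_pos_pos[of "fst (v r) - fst (v p)" "snd (v q) - snd R"] by linarith
      show False
      proof (cases "snd (v q) = snd R")
        case True
        hence "v q = R" using R(2) by (simp add: prod_eq_iff)
        thus False using not_ext[OF qr pH(1,2)] R(1) by simp
      next
        case False
        hence "v q \<in> open_segment B R"
          using le By yU[OF qU] R(2) B(2) by (intro vert_between) auto
        thus False using not_ext[OF qr BH RH] by simp
      qed
    qed
  }
  {
    assume qD: "q \<in> D"
    obtain B where B: "B \<in> open_segment (v 0) (v (n+1))" "fst B = fst (v q)"
      using seg_point[OF x2] D_range[OF qD] by metis
    have BH: "B \<in> H" using B(1) segH[OF zH] by blast
    have By: "snd B = 0" using B(1) y0 by (auto simp: in_segment)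
    show "orient (v p) (v r) (v q) < 0"
    proof (rule ccontr)
      assume "\<not> ?thesis"
      hence le: "snd (v q) \<ge> snd R" using o dx mult_pos_neg[of "fst (v r) - fst (v p)" "snd (v q) - snd R"] by linarith
      show False
      proof (cases "snd (v q) = snd R")
        case True
        hence "v q = R" using R(2) by (simp add: prod_eq_iff)
        thus False using not_ext[OF qr pH(1,2)] R(1) by simp
      next
        case False
        hence "v q \<in> open_segment R B"
          using le By yD[OF qD] R(2) B(2) by (intro vert_between) auto
        thus False using not_ext[OF qr RH BH] by simp
      qed
    qed
  }
qed

end


definition above :: "nat set \<Rightarrow> nat set \<Rightarrow> nat \<Rightarrow> nat \<Rightarrow> nat \<Rightarrow> bool" where
  "above U D a b c \<longleftrightarrow> (c < a \<and> a \<in> D) \<or> (a < c \<and> c < b \<and> c \<in> U) \<or> (b < c \<and> b \<in> D)"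

definition crs :: "nat set \<Rightarrow> nat \<Rightarrow> nat \<Rightarrow> nat \<Rightarrow> nat \<Rightarrow> bool" where
  "crs U a b c d \<longleftrightarrow> (a < c \<and> c < b \<and> b < d \<and> (b \<in> U \<longleftrightarrow> c \<in> U)) \<or>
                       (a < c \<and> c < d \<and> d < b \<and> (c \<in> U \<longleftrightarrow> d \<notin> U))"

definition cr :: "nat set \<Rightarrow> nat \<times> nat \<Rightarrow> nat \<times> nat \<Rightarrow> bool" where
  "cr U d e \<longleftrightarrow> crs U (fst d) (snd d) (fst e) (snd e) \<or> crs U (fst e) (snd e) (fst d) (snd d)"

lemma sign_prod:
  fixes x y :: real
  assumes "if P then x > 0 else x < 0" "if Q then y > 0 else y < 0"
  shows "x * y < 0 \<longleftrightarrow> P \<noteq> Q"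
  using assms by (auto split: if_splits simp: mult_pos_neg mult_neg_pos mult_less_0_iff)

context poly begin

lemma mem_UD: "0 < z \<Longrightarrow> z \<le> n \<Longrightarrow> (z \<in> U \<longleftrightarrow> z \<notin> D)"
  using UD UDd by auto
lemma notUD: "0 \<notin> U" "0 \<notin> D" "n+1 \<notin> U" "n+1 \<notin> D" "z > n \<Longrightarrow> z \<notin> U" "z > n \<Longrightarrow> z \<notin> D"
proof -
  have "U \<subseteq> {1..n}" "D \<subseteq> {1..n}" using UD by auto
  thus "0 \<notin> U" "0 \<notin> D" "n+1 \<notin> U" "n+1 \<notin> D" "z > n \<Longrightarrow> z \<notin> U" "z > n \<Longrightarrow> z \<notin> D"
    by auto
qed

lemma orient_above:
  assumes "a < b" "b \<le> n+1" "c \<le> n+1" "c \<noteq> a" "c \<noteq> b"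
  shows "if above U D a b c then orient (v a) (v b) (v c) > 0 else orient (v a) (v b) (v c) < 0"
proof -
  consider "c < a" | "a < c \<and> c < b" | "b < c" using assms by linarith
  thus ?thesis
  proof cases
    case 1
    have e: "orient (v a) (v b) (v c) = - orient (v c) (v b) (v a)"
      by (metis orient_cyc orient_swap)
    have "a \<in> U \<or> a \<in> D" "\<not> (a \<in> U \<and> a \<in> D)" using 1 assms UD UDd by auto
    thus ?thesis using G1[of c a b] 1 assms e unfolding above_def by auto
  next
    case 2
    have "c \<in> U \<or> c \<in> D" "\<not> (c \<in> U \<and> c \<in> D)" using 2 assms UD UDd by auto
    thus ?thesis using G1[of a c b] 2 assms unfolding above_def by auto
  next
    case 3
    have e: "orient (v a) (v b) (v c) = - orient (v a) (v c) (v b)"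
      by (metis orient_cyc orient_swap)
    have "b \<in> U \<or> b \<in> D" "\<not> (b \<in> U \<and> b \<in> D)" using 3 assms UD UDd by auto
    thus ?thesis using G1[of a b c] 3 assms e unfolding above_def by auto
  qed
qed

lemma orient_nz:
  assumes "i \<le> n+1" "j \<le> n+1" "k \<le> n+1" "i \<noteq> j" "j \<noteq> k" "i \<noteq> k"
  shows "orient (v i) (v j) (v k) \<noteq> 0"
proof (cases "i < j")
  case True
  thus ?thesis using orient_above[of i j k] assms by (auto split: if_splits)
next
  case False
  hence "j < i" using assms by simp
  moreover have "orient (v i) (v j) (v k) = - orient (v j) (v i) (v k)" by (rule orient_swap)
  ultimately show ?thesis using orient_above[of j i k] assms by (auto split: if_splits)
qed

lemma comb_cross:
  assumes "a < b" "c < d" "d \<le> n+1" "b \<le> n+1" "a \<noteq> c" "a \<noteq> d" "b \<noteq> c" "b \<noteq> d"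
  shows "((above U D a b c \<noteq> above U D a b d) \<and> (above U D c d a \<noteq> above U D c d b)) \<longleftrightarrow> cr U (a,b) (c,d)"
proof -
  have m: "\<And>z. 0 < z \<Longrightarrow> z \<le> n \<Longrightarrow> (z \<in> D \<longleftrightarrow> z \<notin> U)" using mem_UD by blast
  consider "a < c" "c < b" "b < d" | "a < c" "d < b" | "b < c" | "c < a" "a < d" "d < b" | "c < a" "b < d" | "d < a"
    using assms by linarith
  thus ?thesis
  proof cases
    case 1 thus ?thesis using assms m[of b] m[of c] unfolding above_def cr_def crs_def by auto
  next
    case 2 thus ?thesis using assms m[of d] m[of c] unfolding above_def cr_def crs_def by auto
  next
    case 3 thus ?thesis using assms m[of b] m[of c] unfolding above_def cr_def crs_def by auto
  next
    case 4 thus ?thesis using assms m[of a] m[of d] unfolding above_def cr_def crs_def by auto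
  next
    case 5 thus ?thesis using assms m[of a] m[of b] unfolding above_def cr_def crs_def by auto
  next
    case 6 thus ?thesis using assms m[of a] m[of d] unfolding above_def cr_def crs_def by auto
  qed
qed

lemma cr_distinct: "cr U (a,b) (c,d) \<Longrightarrow> a \<noteq> c \<and> a \<noteq> d \<and> b \<noteq> c \<and> b \<noteq> d"
  unfolding cr_def crs_def by auto

lemma diag_cross_iff:
  assumes "a < b" "b \<le> n+1" "c < d" "d \<le> n+1"
  shows "diag_cross v (a,b) (c,d) \<longleftrightarrow> cr U (a,b) (c,d)"
proof (cases "a \<noteq> c \<and> a \<noteq> d \<and> b \<noteq> c \<and> b \<noteq> d")
  case True
  have nz: "orient (v a) (v b) (v c) \<noteq> 0" "orient (v a) (v b) (v d) \<noteq> 0"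
     "orient (v c) (v d) (v a) \<noteq> 0" "orient (v c) (v d) (v b) \<noteq> 0"
    using True assms orient_nz[of a b c] orient_nz[of a b d] orient_nz[of c d a] orient_nz[of c d b]
    by auto
  have "diag_cross v (a,b) (c,d) \<longleftrightarrow>
     orient (v a) (v b) (v c) * orient (v a) (v b) (v d) < 0 \<and> orient (v c) (v d) (v a) * orient (v c) (v d) (v b) < 0"
    unfolding diag_cross_def using cross_iff[OF nz] True by auto
  also have "\<dots> \<longleftrightarrow> (above U D a b c \<noteq> above U D a b d) \<and> (above U D c d a \<noteq> above U D c d b)"
    using sign_prod[OF orient_above[of a b c] orient_above[of a b d]]
      sign_prod[OF orient_above[of c d a] orient_above[of c d b]] True assms by auto
  also have "\<dots> \<longleftrightarrow> cr U (a,b) (c,d)" using comb_cross True assms by auto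
  finally show ?thesis .
next
  case False
  hence ncr: "\<not> cr U (a,b) (c,d)" using cr_distinct by blast
  have "open_segment (v a) (v b) \<inter> open_segment (v c) (v d) = {}" if ne: "(a,b) \<noteq> (c,d)"
  proof -
    consider "a = c" "b \<noteq> d" | "a = d" | "b = c" | "b = d" "a \<noteq> c" using False ne by auto
    thus ?thesis
    proof cases
      case 1 thus ?thesis using shared_end[of "v a" "v b" "v d"] orient_nz[of a b d] assms by auto
    next
      case 2 thus ?thesis using shared_end[of "v a" "v b" "v c"] orient_nz[of a b c] assms
        by (auto simp: open_segment_commute)
    next
      case 3 thus ?thesis using shared_end[of "v b" "v a" "v d"] orient_nz[of b a d] assms
        by (auto simp: open_segment_commute)
    next
      case 4 thus ?thesis using shared_end[of "v b" "v a" "v c"] orient_nz[of b a c] assms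
        by (auto simp: open_segment_commute)
    qed
  qed
  thus ?thesis using ncr unfolding diag_cross_def by auto
qed

end


context poly begin

lemma cD: "z \<le> n+1 \<Longrightarrow> z \<notin> U \<Longrightarrow> z \<in> {0,n+1} \<union> D"
  using UD by (cases "z = 0 \<or> z = n+1") auto
lemma cU: "z \<le> n+1 \<Longrightarrow> z \<notin> D \<Longrightarrow> z \<in> {0,n+1} \<union> U"
  using UD by (cases "z = 0 \<or> z = n+1") auto

lemma exists_cross_chord:
  assumes ab: "a < b" "b \<le> n+1" and nU: "(a,b) \<notin> path_edges ({0, n+1} \<union> U)"
    and nD: "(a,b) \<notin> path_edges ({0, n+1} \<union> D)"
  shows "\<exists>c d. c < d \<and> d \<le> n+1 \<and> cr U (a,b) (c,d)"
proof -
  have m: "\<And>z. 0 < z \<Longrightarrow> z \<le> n \<Longrightarrow> (z \<in> D \<longleftrightarrow> z \<notin> U)" using mem_UD by blast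
  have rU: "\<And>z. z \<in> U \<Longrightarrow> 0 < z \<and> z \<le> n" and rD: "\<And>z. z \<in> D \<Longrightarrow> 0 < z \<and> z \<le> n"
    using U_range D_range by (simp add: Suc_le_eq)+
  have PE: "(a,b) \<in> path_edges S" if "a \<in> S" "b \<in> S" "\<forall>c\<in>S - {0,n+1}. \<not> (a < c \<and> c < b)" for S
  proof -
    have "\<forall>c\<in>S. \<not> (a < c \<and> c < b)" using that(3) ab by auto
    thus ?thesis using that(1,2) ab(1) unfolding path_edges_def by blast
  qed
  show ?thesis
  proof (cases "\<exists>c\<in>U. \<exists>e\<in>D. a < c \<and> c < b \<and> a < e \<and> e < b")
    case True
    then obtain c e where ce: "c \<in> U" "e \<in> D" "a < c" "c < b" "a < e" "e < b" by blast
    have "c \<noteq> e" using ce UDd by auto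
    have eU: "e \<notin> U" using ce UDd by auto
    have "cr U (a,b) (min c e, max c e)"
    proof (cases "c < e")
      case True thus ?thesis using ce eU unfolding cr_def crs_def by (simp add: min_def max_def)
    next
      case False hence "e < c" using \<open>c \<noteq> e\<close> by simp
      thus ?thesis using ce eU unfolding cr_def crs_def by (simp add: min_def max_def)
    qed
    moreover have "min c e < max c e" "max c e \<le> n+1" using \<open>c \<noteq> e\<close> ce ab by auto
    ultimately show ?thesis by blast
  next
    case False
    show ?thesis
    proof (cases "\<exists>c\<in>U. a < c \<and> c < b")
      case True
      then obtain c where c: "c \<in> U" "a < c" "c < b" by blast
      have noD: "\<forall>e\<in>D. \<not> (a < e \<and> e < b)" using False c by blast
      show ?thesis
      proof (cases "a \<in> U")
        case True
        hence "cr U (a,b) (0,c)" using c rU[of a] unfolding cr_def crs_def by auto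
        thus ?thesis using c ab by (intro exI[of _ 0] exI[of _ c]) auto
      next
        case False
        have "b \<in> U"
        proof (rule ccontr)
          assume "b \<notin> U"
          hence "(a,b) \<in> path_edges ({0, n+1} \<union> D)"
            using False noD ab cD[of a] cD[of b] \<open>b \<notin> U\<close> by (intro PE) auto
          thus False using nD by blast
        qed
        hence "cr U (a,b) (c,n+1)" using c rU[of b] unfolding cr_def crs_def by auto
        thus ?thesis using c ab by (intro exI[of _ c] exI[of _ "n+1"]) auto
      qed
    next
      case noU: False
      show ?thesis
      proof (cases "\<exists>c\<in>D. a < c \<and> c < b")
        case True
        then obtain c where c: "c \<in> D" "a < c" "c < b" by blast
        have cnU: "c \<notin> U" using c UDd by auto
        show ?thesis
        proof (cases "a \<in> D")
          case True
          hence "cr U (a,b) (0,c)" using c cnU rD[of a] UDd unfolding cr_def crs_def by auto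
          thus ?thesis using c ab by (intro exI[of _ 0] exI[of _ c]) auto
        next
          case False
          have "b \<in> D"
          proof (rule ccontr)
            assume "b \<notin> D"
            hence "(a,b) \<in> path_edges ({0, n+1} \<union> U)"
              using False noU ab cU[of a] cU[of b] \<open>b \<notin> D\<close> by (intro PE) auto
            thus False using nU by blast
          qed
          hence "cr U (a,b) (c,n+1)" using c cnU rD[of b] UDd unfolding cr_def crs_def by auto
          thus ?thesis using c ab by (intro exI[of _ c] exI[of _ "n+1"]) auto
        qed
      next
        case noD: False
        have "a \<in> D \<or> b \<in> D"
        proof (rule ccontr)
          assume "\<not> ?thesis"
          hence "(a,b) \<in> path_edges ({0, n+1} \<union> U)"
            using noU ab cU[of a] cU[of b] \<open>\<not> (a \<in> D \<or> b \<in> D)\<close> by (intro PE) auto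
          thus False using nU by blast
        qed
        moreover have "a \<in> U \<or> b \<in> U"
        proof (rule ccontr)
          assume "\<not> ?thesis"
          hence "(a,b) \<in> path_edges ({0, n+1} \<union> D)"
            using noD ab cD[of a] cD[of b] \<open>\<not> (a \<in> U \<or> b \<in> U)\<close> by (intro PE) auto
          thus False using nD by blast
        qed
        ultimately have "(a \<in> D \<and> b \<in> U) \<or> (a \<in> U \<and> b \<in> D)" using UDd by auto
        hence "cr U (a,b) (0,n+1)" using rU[of a] rU[of b] rD[of a] rD[of b] UDd ab unfolding cr_def crs_def
          by (elim disjE conjE) auto
        thus ?thesis by (intro exI[of _ 0] exI[of _ "n+1"]) auto
      qed
    qed
  qed
qed

lemma closed_seg_orient: "X \<in> closed_segment A B \<Longrightarrow> orient A B X = 0"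
  by (auto simp: in_segment orient_aff orient_self)

lemma is_diag:
  assumes ab: "a < b" "b \<le> n+1" and nU: "(a,b) \<notin> path_edges ({0, n+1} \<union> U)"
    and nD: "(a,b) \<notin> path_edges ({0, n+1} \<union> D)"
  shows "is_diagonal n v (a,b)"
proof -
  obtain c d where cd: "c < d" "d \<le> n+1" "cr U (a,b) (c,d)"
    using exists_cross_chord[OF assms] by blast
  have dist: "a \<noteq> c \<and> a \<noteq> d \<and> b \<noteq> c \<and> b \<noteq> d" using cr_distinct[OF cd(3)] .
  have "diag_cross v (a,b) (c,d)" using diag_cross_iff[of a b c d] ab cd by auto
  then obtain p where p: "p \<in> open_segment (v a) (v b)" "p \<in> open_segment (v c) (v d)"
    unfolding diag_cross_def by auto
  have "\<not> closed_segment (v a) (v b) face_of H"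
  proof
    assume F: "closed_segment (v a) (v b) face_of H"
    have "p \<in> closed_segment (v a) (v b)" using p(1) open_closed_segment by blast
    hence "v c \<in> closed_segment (v a) (v b)"
      using face_ofD[OF F p(2)] inH cd by auto
    hence "orient (v a) (v b) (v c) = 0" by (rule closed_seg_orient)
    thus False using orient_nz[of a b c] dist ab cd by auto
  qed
  thus ?thesis unfolding is_diagonal_def using ab by auto
qed

lemma slope_less:
  assumes "a < b" "b \<le> n+1" "c < e" "e \<le> n+1" "c \<noteq> a" "c \<noteq> b" "e \<noteq> a" "e \<noteq> b"
    and "above U D a b e" "\<not> above U D a b c"
  shows "slope v (a,b) < slope v (c,e)"
proof -
  have o1: "orient (v a) (v b) (v e) > 0" using orient_above[of a b e] assms by auto
  have o2: "orient (v a) (v b) (v c) < 0" using orient_above[of a b c] assms by auto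
  have x1: "fst (v b) - fst (v a) > 0" "fst (v e) - fst (v c) > 0" using xmono assms by auto
  have key: "(snd (v e) - snd (v c)) * (fst (v b) - fst (v a)) - (snd (v b) - snd (v a)) * (fst (v e) - fst (v c))
     = orient (v a) (v b) (v e) - orient (v a) (v b) (v c)"
    unfolding orient_def by (simp add: algebra_simps)
  have "(snd (v b) - snd (v a)) * (fst (v e) - fst (v c)) < (snd (v e) - snd (v c)) * (fst (v b) - fst (v a))"
    using key o1 o2 by linarith
  thus ?thesis unfolding slope_def using x1 by (simp add: divide_simps)
qed

end


definition Lset :: "nat \<Rightarrow> nat set \<Rightarrow> nat set \<Rightarrow> nat set \<Rightarrow> nat set" where
  "Lset n U D P = {0, n+1} \<union> (D - P) \<union> (U \<inter> P)"

definition Eset :: "nat \<Rightarrow> nat set \<Rightarrow> nat set \<Rightarrow> (nat \<Rightarrow> nat) \<Rightarrow> (nat \<times> nat) set" where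
  "Eset n U D x = {d. \<exists>i\<le>n. d \<in> path_edges (lam n U D x i)}"

lemma PE_iff: "(a,b) \<in> path_edges S \<longleftrightarrow> a \<in> S \<and> b \<in> S \<and> a < b \<and> (\<forall>c\<in>S. \<not> (a < c \<and> c < b))"
  unfolding path_edges_def by auto

context poly begin

lemma lam_Lset:
  assumes xp: "x permutes {1..n}"
  shows "i \<le> n \<Longrightarrow> lam n U D x i = Lset n U D (x ` {1..i})"
proof (induction i)
  case 0
  thus ?case unfolding Lset_def by auto
next
  case (Suc i)
  have w: "x (Suc i) \<in> {1..n}" using permutes_in_image[OF xp] Suc.prems by simp
  have img: "x ` {1..Suc i} = insert (x (Suc i)) (x ` {1..i})"
    by (simp add: atLeastAtMostSuc_conv)
  have IH: "lam n U D x i = Lset n U D (x ` {1..i})" using Suc by simp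
  show ?case
  proof (cases "x (Suc i) \<in> D")
    case True
    hence "x (Suc i) \<notin> U" using UDd by auto
    thus ?thesis using True w IH unfolding img Lset_def by auto
  next
    case False
    hence "x (Suc i) \<in> U" using w UD by auto
    thus ?thesis using False w IH unfolding img Lset_def by auto
  qed
qed

lemma UDsub: "U \<subseteq> {1..n}" "D \<subseteq> {1..n}" using UD by auto

lemma Lset_range: "Lset n U D P \<subseteq> {0..n+1}"
  unfolding Lset_def using UDsub by auto

lemma Lset_mem: "1 \<le> z \<Longrightarrow> z \<le> n \<Longrightarrow> z \<in> Lset n U D P \<longleftrightarrow> (z \<in> D \<and> z \<notin> P) \<or> (z \<in> U \<and> z \<in> P)"
  unfolding Lset_def by auto

lemma Lset_0: "Lset n U D {} = {0, n+1} \<union> D" unfolding Lset_def by auto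
lemma Lset_n: "Lset n U D {1..n} = {0, n+1} \<union> U" unfolding Lset_def using UD by auto

lemma PE_range: "S \<subseteq> {0..n+1} \<Longrightarrow> (a,b) \<in> path_edges S \<Longrightarrow> a < b \<and> b \<le> n+1"
  unfolding path_edges_def by auto

lemma edge_int:
  assumes "(a,b) \<in> path_edges (Lset n U D P)" "a < z" "z < b"
  shows "(z \<in> U \<longrightarrow> z \<notin> P) \<and> (z \<in> D \<longrightarrow> z \<in> P)"
  using assms unfolding PE_iff Lset_def by auto

lemma edge_end:
  assumes "(a,b) \<in> path_edges (Lset n U D P)" "z = a \<or> z = b"
  shows "(z \<in> U \<longrightarrow> z \<in> P) \<and> (z \<in> D \<longrightarrow> z \<notin> P)"
  using assms UDd notUD(1-4) unfolding PE_iff Lset_def by auto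

lemma noncross_Lset:
  assumes e1: "(a,b) \<in> path_edges (Lset n U D P)" and e2: "(c,d) \<in> path_edges (Lset n U D Q)"
    and PQ: "P \<subseteq> Q \<or> Q \<subseteq> P"
  shows "\<not> cr U (a,b) (c,d)"
proof
  assume C: "cr U (a,b) (c,d)"
  have r1: "b \<le> n+1" "d \<le> n+1" using PE_range[OF Lset_range e1] PE_range[OF Lset_range e2] by auto
  have m: "\<And>z. 0 < z \<Longrightarrow> z \<le> n \<Longrightarrow> (z \<in> D \<longleftrightarrow> z \<notin> U)" using mem_UD by blast
  have i1: "\<And>z. a < z \<Longrightarrow> z < b \<Longrightarrow> (z \<in> U \<longrightarrow> z \<notin> P) \<and> (z \<in> D \<longrightarrow> z \<in> P)"
    using edge_int[OF e1] by blast
  have i2: "\<And>z. c < z \<Longrightarrow> z < d \<Longrightarrow> (z \<in> U \<longrightarrow> z \<notin> Q) \<and> (z \<in> D \<longrightarrow> z \<in> Q)"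
    using edge_int[OF e2] by blast
  have n1: "\<And>z. z = a \<or> z = b \<Longrightarrow> (z \<in> U \<longrightarrow> z \<in> P) \<and> (z \<in> D \<longrightarrow> z \<notin> P)"
    using edge_end[OF e1] by blast
  have n2: "\<And>z. z = c \<or> z = d \<Longrightarrow> (z \<in> U \<longrightarrow> z \<in> Q) \<and> (z \<in> D \<longrightarrow> z \<notin> Q)"
    using edge_end[OF e2] by blast
  from C consider
      "a < c" "c < b" "b < d" "b \<in> U \<longleftrightarrow> c \<in> U"
    | "a < c" "c < d" "d < b" "c \<in> U \<longleftrightarrow> d \<notin> U"
    | "c < a" "a < d" "d < b" "d \<in> U \<longleftrightarrow> a \<in> U"
    | "c < a" "a < b" "b < d" "a \<in> U \<longleftrightarrow> b \<notin> U"
    unfolding cr_def crs_def by auto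
  thus False
  proof cases
    case 1
    have bc: "0 < b" "b \<le> n" "0 < c" "c \<le> n" using 1 r1 by auto
    show False
    proof (cases "c \<in> U")
      case True
      thus False using 1 i1[of c] i2[of b] n1[of b] n2[of c] PQ by auto
    next
      case False
      hence "c \<in> D" "b \<in> D" using 1 m bc by auto
      thus False using 1 i1[of c] i2[of b] n1[of b] n2[of c] PQ UDd by auto
    qed
  next
    case 2
    have bc: "0 < c" "c \<le> n" "0 < d" "d \<le> n" using 2 r1 by auto
    show False
    proof (cases "c \<in> U")
      case True
      hence "d \<in> D" using 2 m bc by auto
      thus False using True 2 i1[of c] i1[of d] n2[of c] n2[of d] PQ UDd by auto
    next
      case False
      hence "c \<in> D" "d \<in> U" using 2 m bc by auto
      thus False using 2 i1[of c] i1[of d] n2[of c] n2[of d] PQ UDd by auto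
    qed
  next
    case 3
    have bc: "0 < a" "a \<le> n" "0 < d" "d \<le> n" using 3 r1 by auto
    show False
    proof (cases "a \<in> U")
      case True
      thus False using 3 i2[of a] i1[of d] n2[of d] n1[of a] PQ by auto
    next
      case False
      hence "a \<in> D" "d \<in> D" using 3 m bc by auto
      thus False using 3 i2[of a] i1[of d] n2[of d] n1[of a] PQ UDd by auto
    qed
  next
    case 4
    have bc: "0 < a" "a \<le> n" "0 < b" "b \<le> n" using 4 r1 by auto
    show False
    proof (cases "a \<in> U")
      case True
      hence "b \<in> D" using 4 m bc by auto
      thus False using True 4 i2[of a] i2[of b] n1[of a] n1[of b] PQ UDd by auto
    next
      case False
      hence "a \<in> D" "b \<in> U" using 4 m bc by auto
      thus False using 4 i2[of a] i2[of b] n1[of a] n1[of b] PQ UDd by auto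
    qed
  qed
qed

lemma prefix_nested: fixes x :: "nat \<Rightarrow> nat" and i k :: nat shows "x ` {1..i} \<subseteq> x ` {1..k} \<or> x ` {1..k} \<subseteq> x ` {1..i}"
proof (cases "i \<le> k")
  case True
  hence "{1..i} \<subseteq> {1..k}" by auto
  thus ?thesis by (blast intro: image_mono)
next
  case False
  hence "{1..k} \<subseteq> {1..i}" by auto
  thus ?thesis by (blast intro: image_mono)
qed

lemma Eset_range:
  assumes xp: "x permutes {1..n}" "e \<in> Eset n U D x"
  shows "fst e < snd e \<and> snd e \<le> n+1"
proof -
  obtain i where i: "i \<le> n" "e \<in> path_edges (lam n U D x i)" using assms unfolding Eset_def by auto
  obtain a b where e: "e = (a,b)" by (cases e)
  show ?thesis using PE_range[OF Lset_range[where P="x ` {1..i}"], where a=a and b=b] i lam_Lset[OF assms(1) i(1)] e by simp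
qed

lemma Eset_noncross:
  assumes xp: "x permutes {1..n}" and d: "d \<in> Eset n U D x" and e: "e \<in> Eset n U D x"
  shows "\<not> cr U d e"
proof -
  obtain i where i: "i \<le> n" "d \<in> path_edges (lam n U D x i)" using d unfolding Eset_def by auto
  obtain k where k: "k \<le> n" "e \<in> path_edges (lam n U D x k)" using e unfolding Eset_def by auto
  obtain a b where ab: "d = (a,b)" by (cases d)
  obtain c f where cf: "e = (c,f)" by (cases e)
  show ?thesis using noncross_Lset[OF _ _ prefix_nested[of x i k]] i k ab cf
      lam_Lset[OF xp i(1)] lam_Lset[OF xp k(1)] by simp
qed

end


definition Ab :: "nat set \<Rightarrow> nat set \<Rightarrow> nat \<Rightarrow> nat \<Rightarrow> nat set \<Rightarrow> bool" where
  "Ab U D a b L \<longleftrightarrow> (\<forall>c\<in>L. a < c \<and> c < b \<longrightarrow> c \<in> D) \<and> (a \<in> L \<or> a \<in> U) \<and> (b \<in> L \<or> b \<in> U)"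

lemma nbr_lo:
  fixes L :: "nat set"
  assumes "0 \<in> L" "0 < w"
  obtains p where "p \<in> L" "p < w" "\<And>c. c \<in> L \<Longrightarrow> c < w \<Longrightarrow> c \<le> p"
proof -
  let ?S = "{c\<in>L. c < w}"
  have f: "finite ?S" by (rule finite_subset[of _ "{..<w}"]) auto
  have "0 \<in> ?S" using assms by simp
  hence ne: "?S \<noteq> {}" by blast
  have m1: "Max ?S \<in> L" "Max ?S < w" using Max_in[OF f ne] by auto
  show ?thesis
  proof (rule that[OF m1])
    fix c assume "c \<in> L" "c < w"
    thus "c \<le> Max ?S" by (intro Max_ge[OF f]) simp
  qed
qed

lemma nbr_hi:
  fixes L :: "nat set"
  assumes "m \<in> L" "w < m"
  obtains q where "q \<in> L" "w < q" "\<And>c. c \<in> L \<Longrightarrow> w < c \<Longrightarrow> q \<le> c"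
proof -
  let ?q = "LEAST c. c \<in> L \<and> w < c"
  have m1: "?q \<in> L" "w < ?q" using LeastI[of "\<lambda>c. c \<in> L \<and> w < c" m] assms by auto
  show ?thesis
  proof (rule that[OF m1])
    fix c assume "c \<in> L" "w < c"
    thus "?q \<le> c" by (intro Least_le) simp
  qed
qed

context poly begin

lemma step_U:
  assumes A: "Ab U D a b L" and w: "w \<in> U" and L0: "0 \<in> L" "n+1 \<in> L" and ab: "a < b" "b \<le> n+1"
  shows "Ab U D a b (insert w L) \<or> (a,b) \<in> path_edges L \<or> (a,b) \<in> path_edges (insert w L) \<or>
         (\<exists>e\<in>path_edges (insert w L). cr U (a,b) e)"
proof (rule ccontr)
  assume N: "\<not> ?thesis"
  have wD: "w \<notin> D" using w UDd by auto
  have wr: "0 < w" "w < n+1" using U_range[OF w] by auto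
  have Aint: "\<And>c. c \<in> L \<Longrightarrow> a < c \<Longrightarrow> c < b \<Longrightarrow> c \<in> D" and Aa: "a \<in> L \<or> a \<in> U" and Ab': "b \<in> L \<or> b \<in> U"
    using A unfolding Ab_def by auto
  have wL: "w \<notin> L" using N A by (auto simp: insert_absorb)
  have awb: "a < w" "w < b"
  proof -
    have "\<not> Ab U D a b (insert w L)" using N by blast
    hence "\<not> (\<forall>c\<in>insert w L. a < c \<and> c < b \<longrightarrow> c \<in> D)" using Aa Ab' unfolding Ab_def by auto
    then obtain c where "c \<in> insert w L" "a < c" "c < b" "c \<notin> D" by blast
    hence "c = w" using Aint by auto
    thus "a < w" "w < b" using \<open>a < c\<close> \<open>c < b\<close> by auto
  qed
  obtain p where p: "p \<in> L" "p < w" "\<And>c. c \<in> L \<Longrightarrow> c < w \<Longrightarrow> c \<le> p" using nbr_lo[OF L0(1) wr(1)] by blast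
  obtain q where q: "q \<in> L" "w < q" "\<And>c. c \<in> L \<Longrightarrow> w < c \<Longrightarrow> q \<le> c" using nbr_hi[OF L0(2) wr(2)] by blast
  have e1: "(p,w) \<in> path_edges (insert w L)" unfolding PE_iff using p by force
  have e2: "(w,q) \<in> path_edges (insert w L)" unfolding PE_iff using q by force
  consider "a < p" | "p < a" | "p = a" "q < b" | "p = a" "b < q" | "p = a" "q = b" by linarith
  thus False
  proof cases
    case 1
    have "p \<in> D" using Aint[OF p(1) 1] p(2) awb by simp
    hence "p \<notin> U" using UDd by auto
    hence "cr U (a,b) (p,w)" using 1 p awb w unfolding cr_def crs_def by auto
    thus False using N e1 by blast
  next
    case 2
    have "a \<notin> L" using p(3)[of a] 2 awb by auto
    hence "a \<in> U" using Aa by auto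
    hence "cr U (a,b) (p,w)" using 2 p awb w unfolding cr_def crs_def by auto
    thus False using N e1 by blast
  next
    case 3
    have "q \<in> D" using Aint[OF q(1)] 3 q(2) awb by simp
    hence "q \<notin> U" using UDd by auto
    hence "cr U (a,b) (w,q)" using 3 q awb w unfolding cr_def crs_def by auto
    thus False using N e2 by blast
  next
    case 4
    have "b \<notin> L" using q(3)[of b] 4 awb by auto
    hence "b \<in> U" using Ab' by auto
    hence "cr U (a,b) (w,q)" using 4 q awb w unfolding cr_def crs_def by auto
    thus False using N e2 by blast
  next
    case 5
    have "(a,b) \<in> path_edges L" unfolding PE_iff
    proof (intro conjI ballI)
      fix c assume "c \<in> L"
      moreover have "c \<noteq> w" using wL \<open>c \<in> L\<close> by auto
      ultimately show "\<not> (a < c \<and> c < b)" using p(3)[of c] q(3)[of c] 5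
        by (cases "c < w"; cases "w < c") auto
    qed (use 5 p q ab in auto)
    thus False using N by blast
  qed
qed

lemma step_D:
  assumes A: "Ab U D a b L" and w: "w \<in> D" and L0: "0 \<in> L" "n+1 \<in> L" and ab: "a < b" "b \<le> n+1"
  shows "Ab U D a b (L - {w}) \<or> (a,b) \<in> path_edges L \<or> (a,b) \<in> path_edges (L - {w}) \<or>
         (\<exists>e\<in>path_edges (L - {w}). cr U (a,b) e)"
proof (rule ccontr)
  assume N: "\<not> ?thesis"
  have wU: "w \<notin> U" using w UDd by auto
  have wr: "0 < w" "w < n+1" using D_range[OF w] by auto
  have Aint: "\<And>c. c \<in> L \<Longrightarrow> a < c \<Longrightarrow> c < b \<Longrightarrow> c \<in> D" and Aa: "a \<in> L \<or> a \<in> U" and Ab': "b \<in> L \<or> b \<in> U"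
    using A unfolding Ab_def by auto
  have "\<not> Ab U D a b (L - {w})" using N by blast
  hence ends: "(a = w \<and> w \<in> L) \<or> (b = w \<and> w \<in> L)" using Aint Aa Ab' wU unfolding Ab_def by auto
  have wL: "w \<in> L" using ends by auto
  obtain p where p: "p \<in> L" "p < w" "\<And>c. c \<in> L \<Longrightarrow> c < w \<Longrightarrow> c \<le> p" using nbr_lo[OF L0(1) wr(1)] by blast
  obtain q where q: "q \<in> L" "w < q" "\<And>c. c \<in> L \<Longrightarrow> w < c \<Longrightarrow> q \<le> c" using nbr_hi[OF L0(2) wr(2)] by blast
  have e: "(p,q) \<in> path_edges (L - {w})" unfolding PE_iff
  proof (intro conjI ballI)
    fix c assume "c \<in> L - {w}"
    thus "\<not> (p < c \<and> c < q)" using p(3)[of c] q(3)[of c] by (cases "c < w") (auto simp: not_less)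
  qed (use p q in auto)
  from ends show False
  proof
    assume aw: "a = w \<and> w \<in> L"
    consider "q < b" | "b < q" | "q = b" by linarith
    thus False
    proof cases
      case 1
      have "q \<in> D" using Aint[OF q(1)] 1 q(2) aw by simp
      hence "q \<notin> U" using UDd by auto
      hence "cr U (a,b) (p,q)" using 1 p q aw wU unfolding cr_def crs_def by auto
      thus False using N e by blast
    next
      case 2
      have "b \<notin> L" using q(3)[of b] 2 aw ab by auto
      hence "b \<in> U" using Ab' by auto
      hence "cr U (a,b) (p,q)" using 2 p q aw wU ab unfolding cr_def crs_def by auto
      thus False using N e by blast
    next
      case 3
      have "(a,b) \<in> path_edges L" unfolding PE_iff
      proof (intro conjI ballI)
        fix c assume "c \<in> L"
        thus "\<not> (a < c \<and> c < b)" using q(3)[of c] 3 aw by auto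
      qed (use 3 aw q in auto)
      thus False using N by blast
    qed
  next
    assume bw: "b = w \<and> w \<in> L"
    consider "a < p" | "p < a" | "p = a" by linarith
    thus False
    proof cases
      case 1
      have "p \<in> D" using Aint[OF p(1) 1] p(2) bw by simp
      hence "p \<notin> U" using UDd by auto
      hence "cr U (a,b) (p,q)" using 1 p q bw wU unfolding cr_def crs_def by auto
      thus False using N e by blast
    next
      case 2
      have "a \<notin> L" using p(3)[of a] 2 bw ab by auto
      hence "a \<in> U" using Aa by auto
      hence "cr U (a,b) (p,q)" using 2 p q bw wU ab unfolding cr_def crs_def by auto
      thus False using N e by blast
    next
      case 3
      have "(a,b) \<in> path_edges L" unfolding PE_iff
      proof (intro conjI ballI)
        fix c assume "c \<in> L"
        thus "\<not> (a < c \<and> c < b)" using p(3)[of c] 3 bw by auto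
      qed (use 3 bw p in auto)
      thus False using N by blast
    qed
  qed
qed

lemma maximal:
  assumes xp: "x permutes {1..n}" and ab: "a < b" "b \<le> n+1" and nE: "(a,b) \<notin> Eset n U D x"
  shows "\<exists>e\<in>Eset n U D x. cr U (a,b) e"
proof -
  let ?L = "lam n U D x"
  let ?G = "\<exists>e\<in>Eset n U D x. cr U (a,b) e"
  have L0: "0 \<in> ?L i" "n+1 \<in> ?L i" if "i \<le> n" for i
    using lam_Lset[OF xp that] unfolding Lset_def by auto
  have inE: "d \<in> Eset n U D x" if "i \<le> n" "d \<in> path_edges (?L i)" for i d
    using that unfolding Eset_def by auto
  have main: "Ab U D a b (?L i) \<longrightarrow> ?G" if "i \<le> n" for i
    using that
  proof (induction rule: inc_induct)
    case base
    have Ln: "?L n = {0, n+1} \<union> U" using lam_Lset[OF xp, of n] permutes_image[OF xp] Lset_n by simp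
    show ?case
    proof
      assume A: "Ab U D a b (?L n)"
      have "(a,b) \<in> path_edges (?L n)" unfolding PE_iff
      proof (intro conjI ballI)
        fix c assume c: "c \<in> ?L n"
        show "\<not> (a < c \<and> c < b)"
        proof
          assume "a < c \<and> c < b"
          hence "c \<in> D" using A c unfolding Ab_def by blast
          moreover have "c \<in> U" using c \<open>a < c \<and> c < b\<close> ab Ln by auto
          ultimately show False using UDd by auto
        qed
      qed (use A Ln ab in \<open>auto simp: Ab_def\<close>)
      thus ?G using inE[of n] nE by auto
    qed
  next
    case (step i)
    show ?case
    proof
      assume A: "Ab U D a b (?L i)"
      have w: "x (Suc i) \<in> {1..n}" using permutes_in_image[OF xp] step.hyps by simp
      show ?G
      proof (cases "x (Suc i) \<in> D")
        case True
        hence Ls: "?L (Suc i) = ?L i - {x (Suc i)}" by simp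
        from step_D[OF A True L0[of i] ab] step.hyps
        show ?G using step.IH Ls inE[of i] inE[of "Suc i"] nE by auto
      next
        case False
        hence wU: "x (Suc i) \<in> U" using w UD by auto
        hence Ls: "?L (Suc i) = insert (x (Suc i)) (?L i)" using False by simp
        from step_U[OF A wU L0[of i] ab] step.hyps
        show ?G using step.IH Ls inE[of i] inE[of "Suc i"] nE by auto
      qed
    qed
  qed
  have "Ab U D a b (?L 0)"
    unfolding Ab_def using ab cD[of a] cD[of b] by auto
  thus ?thesis using main[of 0] by simp
qed

end


lemma PE_agree:
  assumes "\<And>c. u \<le> c \<Longrightarrow> c \<le> w \<Longrightarrow> (c \<in> S \<longleftrightarrow> c \<in> S')"
  shows "(u,w) \<in> path_edges S \<longleftrightarrow> (u,w) \<in> path_edges S'"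
  using assms unfolding PE_iff by (metis less_imp_le order_refl)

locale cover = poly +
  fixes x y :: "nat \<Rightarrow> nat" and j :: nat
  assumes xp: "x permutes {1..n}" and yp: "y permutes {1..n}"
    and j1: "1 \<le> j" and jn: "j + 1 \<le> n" and xlt: "x j < x (j+1)"
    and ydef: "y = x(j := x (j+1), j+1 := x j)"
begin

abbreviation "al \<equiv> x j"
abbreviation "be \<equiv> x (j+1)"
abbreviation "P \<equiv> x ` {1..j-1}"

lemma injx: "inj_on x {1..n}" using xp permutes_inj_on by blast
lemma injy: "inj_on y {1..n}" using yp permutes_inj_on by blast

lemma y_at: "y j = be" "y (j+1) = al" "k \<noteq> j \<Longrightarrow> k \<noteq> j+1 \<Longrightarrow> y k = x k"
  using ydef by auto

lemma ab_range: "1 \<le> al" "al \<le> n" "1 \<le> be" "be \<le> n" "al < be"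
  using permutes_in_image[OF xp, of j] permutes_in_image[OF xp, of "j+1"] j1 jn xlt by auto

lemma ab_notP: "al \<notin> P" "be \<notin> P"
proof -
  show "al \<notin> P"
  proof
    assume "al \<in> P"
    then obtain k where k: "k \<in> {1..j-1}" "x k = x j" by auto
    have "k \<in> {1..n}" "j \<in> {1..n}" "k \<noteq> j" using k(1) j1 jn by auto
    thus False using inj_onD[OF injx k(2)] by blast
  qed
  show "be \<notin> P"
  proof
    assume "be \<in> P"
    then obtain k where k: "k \<in> {1..j-1}" "x k = x (j+1)" by auto
    have "k \<in> {1..n}" "j+1 \<in> {1..n}" "k \<noteq> j+1" using k(1) j1 jn by auto
    thus False using inj_onD[OF injx k(2)] by blast
  qed
qed

lemma pref_same: assumes "i \<noteq> j" shows "y ` {1..i} = x ` {1..i}"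
proof (cases "i < j")
  case True
  thus ?thesis using y_at(3) by (intro image_cong) auto
next
  case False
  hence ij: "j + 1 \<le> i" using assms by simp
  show ?thesis
  proof (intro set_eqI iffI)
    fix z assume "z \<in> y ` {1..i}"
    then obtain k where k: "k \<in> {1..i}" "z = y k" by auto
    show "z \<in> x ` {1..i}"
    proof (cases "k = j \<or> k = j+1")
      case True
      thus ?thesis using k y_at(1,2) ij j1 by (auto intro!: imageI)
    next
      case False
      thus ?thesis using k y_at(3) by auto
    qed
  next
    fix z assume "z \<in> x ` {1..i}"
    then obtain k where k: "k \<in> {1..i}" "z = x k" by auto
    show "z \<in> y ` {1..i}"
    proof (cases "k = j \<or> k = j+1")
      case True
      hence "z = y (j+1) \<or> z = y j" using k y_at(1,2) by auto
      thus ?thesis using ij j1 by (auto intro!: imageI)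
    next
      case False
      hence "z = y k" using k y_at(3) by auto
      thus ?thesis using k by auto
    qed
  qed
qed

lemma pref_j: "x ` {1..j} = insert al P" "y ` {1..j} = insert be P"
  "x ` {1..j+1} = insert al (insert be P)"
proof -
  have e1: "{1..j} = insert j {1..j-1}" using j1 by auto
  have e2: "{1..j+1} = insert (j+1) (insert j {1..j-1})" using j1 by auto
  have "y ` {1..j-1} = P" using pref_same[of "j-1"] j1 by simp
  thus "x ` {1..j} = insert al P" "y ` {1..j} = insert be P"
    "x ` {1..j+1} = insert al (insert be P)" unfolding e1 e2 using y_at(1) by auto
qed

lemma pos_y: "i \<le> n \<Longrightarrow> al \<in> y ` {1..i} \<Longrightarrow> be \<in> y ` {1..i}"
proof -
  assume i: "i \<le> n" and a: "al \<in> y ` {1..i}"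
  then obtain k where k: "k \<in> {1..i}" "y k = y (j+1)" using y_at(2) by auto
  have "k = j+1" using inj_onD[OF injy k(2)] k i j1 jn by auto
  hence "j \<in> {1..i}" using k j1 by auto
  thus "be \<in> y ` {1..i}" using y_at(1) by force
qed

lemma pos_x: "i \<le> n \<Longrightarrow> be \<in> x ` {1..i} \<Longrightarrow> al \<in> x ` {1..i}"
proof -
  assume i: "i \<le> n" and a: "be \<in> x ` {1..i}"
  then obtain k where k: "k \<in> {1..i}" "x k = x (j+1)" by auto
  have "k = j+1" using inj_onD[OF injx k(2)] k i j1 jn by auto
  hence "j \<in> {1..i}" using k j1 by auto
  thus "al \<in> x ` {1..i}" by force
qed

definition R where "R = {d. \<exists>i\<le>n. i \<noteq> j \<and> d \<in> path_edges (lam n U D x i)}"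

lemma lam_xy: "i \<le> n \<Longrightarrow> i \<noteq> j \<Longrightarrow> lam n U D y i = lam n U D x i"
  using lam_Lset[OF xp] lam_Lset[OF yp] pref_same by simp

lemma E_decomp:
  "Eset n U D x = R \<union> path_edges (Lset n U D (insert al P))"
  "Eset n U D y = R \<union> path_edges (Lset n U D (insert be P))"
proof -
  have lx: "lam n U D x j = Lset n U D (insert al P)" using lam_Lset[OF xp, of j] jn pref_j by simp
  have ly: "lam n U D y j = Lset n U D (insert be P)" using lam_Lset[OF yp, of j] jn pref_j by simp
  have jn': "j \<le> n" using jn by simp
  show "Eset n U D x = R \<union> path_edges (Lset n U D (insert al P))"
  proof (intro set_eqI iffI)
    fix d assume "d \<in> Eset n U D x"
    then obtain i where i: "i \<le> n" "d \<in> path_edges (lam n U D x i)" unfolding Eset_def by blast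
    show "d \<in> R \<union> path_edges (Lset n U D (insert al P))"
      using i lx unfolding R_def by (cases "i = j") auto
  next
    fix d assume "d \<in> R \<union> path_edges (Lset n U D (insert al P))"
    thus "d \<in> Eset n U D x" unfolding R_def Eset_def using lx jn' by auto
  qed
  show "Eset n U D y = R \<union> path_edges (Lset n U D (insert be P))"
  proof (intro set_eqI iffI)
    fix d assume "d \<in> Eset n U D y"
    then obtain i where i: "i \<le> n" "d \<in> path_edges (lam n U D y i)" unfolding Eset_def by blast
    show "d \<in> R \<union> path_edges (Lset n U D (insert be P))"
      using i ly lam_xy[of i] unfolding R_def by (cases "i = j") auto
  next
    fix d assume "d \<in> R \<union> path_edges (Lset n U D (insert be P))"
    thus "d \<in> Eset n U D y"
    proof
      assume "d \<in> R"
      then obtain i where "i \<le> n" "i \<noteq> j" "d \<in> path_edges (lam n U D x i)" unfolding R_def by blast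
      thus ?thesis unfolding Eset_def using lam_xy[of i] by auto
    next
      assume "d \<in> path_edges (Lset n U D (insert be P))"
      thus ?thesis unfolding Eset_def using ly jn' by auto
    qed
  qed
qed

lemma R_L0: "path_edges (Lset n U D P) \<subseteq> R"
proof -
  have "lam n U D x (j-1) = Lset n U D P" using lam_Lset[OF xp, of "j-1"] jn by simp
  thus ?thesis unfolding R_def using j1 jn by (auto intro!: exI[of _ "j-1"])
qed

lemma R_L1: "path_edges (Lset n U D (insert al (insert be P))) \<subseteq> R"
proof -
  have "lam n U D x (j+1) = Lset n U D (insert al (insert be P))" using lam_Lset[OF xp, of "j+1"] jn pref_j by simp
  thus ?thesis unfolding R_def using j1 jn by (auto intro!: exI[of _ "j+1"])
qed

end


context cover begin

lemma Lset_ins: "c \<noteq> w \<Longrightarrow> c \<in> Lset n U D (insert w Q) \<longleftrightarrow> c \<in> Lset n U D Q"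
  unfolding Lset_def by auto

lemma jprime:
  assumes "1 \<le> j'" "j' + 1 \<le> n" "x = y(j' := y (j'+1), j'+1 := y j')"
  shows "j' = j"
proof (rule ccontr)
  assume ne: "j' \<noteq> j"
  have xa: "x k = (y(j' := y (j'+1), j'+1 := y j')) k" for k using assms(3) by simp
  show False
  proof (cases "j = j' + 1")
    case True
    have "x j' = y (j'+1)" using xa[of j'] by simp
    hence "x j' = x (j+1)" using True y_at(1) by simp
    moreover have "j' \<in> {1..n}" "j+1 \<in> {1..n}" "j' \<noteq> j+1" using assms True jn by auto
    ultimately show False using inj_onD[OF injx] by blast
  next
    case False
    have "x j = y j" using xa[of j] False ne by simp
    thus False using y_at(1) xlt by simp
  qed
qed

lemma move231_iff: "move_231 n U y x \<longleftrightarrow> (\<exists>c\<in>P. al < c \<and> c < be \<and> c \<in> U)"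
proof
  assume "move_231 n U y x"
  then obtain j' where j': "1 \<le> j'" "j' + 1 \<le> n" "x = y(j' := y (j'+1), j'+1 := y j')"
    "\<exists>i. 1 \<le> i \<and> i < j' \<and> y (j'+1) < y i \<and> y i < y j' \<and> y i \<in> U"
    unfolding move_231_def by blast
  have "j' = j" using jprime j' by blast
  then obtain i where i: "1 \<le> i" "i < j" "al < y i" "y i < be" "y i \<in> U" using j'(4) y_at by auto
  have "y i = x i" using y_at(3) i by auto
  moreover have "x i \<in> P" using i by auto
  ultimately show "\<exists>c\<in>P. al < c \<and> c < be \<and> c \<in> U" using i by metis
next
  assume "\<exists>c\<in>P. al < c \<and> c < be \<and> c \<in> U"
  then obtain i where i: "i \<in> {1..j-1}" "al < x i" "x i < be" "x i \<in> U" by auto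
  have yi: "y i = x i" using y_at(3) i by auto
  have xe: "x = y(j := y (j+1), j+1 := y j)"
  proof
    fix k show "x k = (y(j := y (j+1), j+1 := y j)) k" using y_at by (cases "k = j"; cases "k = j+1") auto
  qed
  show "move_231 n U y x" unfolding move_231_def
    using j1 jn xe i yi y_at(1,2) xlt by (intro exI[of _ j]) auto
qed

lemma move312_iff: "move_312 n D y x \<longleftrightarrow> (\<exists>c. c \<notin> P \<and> al < c \<and> c < be \<and> c \<in> D)"
proof
  assume "move_312 n D y x"
  then obtain j' where j': "1 \<le> j'" "j' + 1 \<le> n" "x = y(j' := y (j'+1), j'+1 := y j')"
    "\<exists>k. j' + 1 < k \<and> k \<le> n \<and> y (j'+1) < y k \<and> y k < y j' \<and> y k \<in> D"
    unfolding move_312_def by blast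
  have "j' = j" using jprime j' by blast
  then obtain k where k: "j + 1 < k" "k \<le> n" "al < y k" "y k < be" "y k \<in> D" using j'(4) y_at by auto
  have yk: "y k = x k" using y_at(3) k by auto
  have "x k \<notin> P"
  proof
    assume "x k \<in> P"
    then obtain i where i: "i \<in> {1..j-1}" "x i = x k" by auto
    have "i \<in> {1..n}" "k \<in> {1..n}" "i \<noteq> k" using i k jn by auto
    thus False using inj_onD[OF injx i(2)] by blast
  qed
  thus "\<exists>c. c \<notin> P \<and> al < c \<and> c < be \<and> c \<in> D" using k yk by metis
next
  assume "\<exists>c. c \<notin> P \<and> al < c \<and> c < be \<and> c \<in> D"
  then obtain c where c: "c \<notin> P" "al < c" "c < be" "c \<in> D" by blast
  have "c \<in> {1..n}" using c D_range by auto
  then obtain k where k: "k \<in> {1..n}" "x k = c" using permutes_image[OF xp] by (metis imageE)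
  have "k \<noteq> j" "k \<noteq> j+1" using k c by auto
  moreover have "\<not> k \<le> j - 1" using k c by auto
  ultimately have kj: "j + 1 < k" by auto
  have yk: "y k = c" using y_at(3) k kj by auto
  have xe: "x = y(j := y (j+1), j+1 := y j)"
  proof
    fix k show "x k = (y(j := y (j+1), j+1 := y j)) k" using y_at by (cases "k = j"; cases "k = j+1") auto
  qed
  show "move_312 n D y x" unfolding move_312_def
    using j1 jn xe k kj yk c y_at(1,2) xlt by (intro exI[of _ j]) auto
qed

lemma move_iff: "(move_231 n U y x \<or> move_312 n D y x) \<longleftrightarrow> (\<exists>c. al < c \<and> c < be \<and> c \<in> Lset n U D P)"
proof -
  have "\<And>c. al < c \<Longrightarrow> c < be \<Longrightarrow> c \<in> Lset n U D P \<longleftrightarrow> (c \<in> D \<and> c \<notin> P) \<or> (c \<in> U \<and> c \<in> P)"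
    using ab_range by (intro Lset_mem) auto
  thus ?thesis unfolding move231_iff move312_iff by blast
qed

abbreviation "L0 \<equiv> Lset n U D P"
abbreviation "Lx \<equiv> Lset n U D (insert al P)"
abbreviation "Ly \<equiv> Lset n U D (insert be P)"
abbreviation "L1 \<equiv> Lset n U D (insert al (insert be P))"

lemma ab_ne: "al \<noteq> be" using ab_range by simp

lemma agree:
  "c \<noteq> al \<Longrightarrow> c \<in> Lx \<longleftrightarrow> c \<in> L0"
  "c \<noteq> be \<Longrightarrow> c \<in> Ly \<longleftrightarrow> c \<in> L0"
  "c \<noteq> be \<Longrightarrow> c \<in> Lx \<longleftrightarrow> c \<in> L1"
  "c \<noteq> al \<Longrightarrow> c \<in> Ly \<longleftrightarrow> c \<in> L1"
  using Lset_ins[of c al] Lset_ins[of c be] unfolding Lset_def by auto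

lemma E_eq_move:
  assumes "\<exists>c. al < c \<and> c < be \<and> c \<in> L0"
  shows "Eset n U D x = Eset n U D y"
proof -
  obtain m where m: "al < m" "m < be" "m \<in> L0" using assms by blast
  have mx: "m \<in> Lx" "m \<in> Ly" using m agree(1,2) by auto
  have "path_edges Lx \<subseteq> R"
  proof
    fix e assume e: "e \<in> path_edges Lx"
    obtain u w where uw: "e = (u,w)" by (cases e)
    have e': "(u,w) \<in> path_edges Lx" using e uw by simp
    have "\<not> (u < m \<and> m < w)" using e' mx(1) unfolding PE_iff by blast
    hence "w \<le> m \<or> m \<le> u" by auto
    thus "e \<in> R"
    proof
      assume "w \<le> m"
      hence "(u,w) \<in> path_edges L1" using e uw m agree(3) by (subst PE_agree[symmetric]) auto
      thus ?thesis using R_L1 uw by auto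
    next
      assume "m \<le> u"
      hence "(u,w) \<in> path_edges L0" using e uw m agree(1) by (subst PE_agree[symmetric]) auto
      thus ?thesis using R_L0 uw by auto
    qed
  qed
  moreover have "path_edges Ly \<subseteq> R"
  proof
    fix e assume e: "e \<in> path_edges Ly"
    obtain u w where uw: "e = (u,w)" by (cases e)
    have e': "(u,w) \<in> path_edges Ly" using e uw by simp
    have "\<not> (u < m \<and> m < w)" using e' mx(2) unfolding PE_iff by blast
    hence "w \<le> m \<or> m \<le> u" by auto
    thus "e \<in> R"
    proof
      assume "w \<le> m"
      hence "(u,w) \<in> path_edges L0" using e uw m agree(2) by (subst PE_agree[symmetric]) auto
      thus ?thesis using R_L0 uw by auto
    next
      assume "m \<le> u"
      hence "(u,w) \<in> path_edges L1" using e uw m agree(4) by (subst PE_agree[symmetric]) auto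
      thus ?thesis using R_L1 uw by auto
    qed
  qed
  ultimately show ?thesis using E_decomp by auto
qed

end


context cover begin

lemma noM_case:
  assumes noM: "\<not> (\<exists>c. al < c \<and> c < be \<and> c \<in> L0)"
  shows "\<exists>d d'. Eset n U D x - Eset n U D y = {d} \<and> Eset n U D y - Eset n U D x = {d'} \<and>
              slope v d < slope v d'"
proof -
  have abr: "1 \<le> al" "al \<le> n" "1 \<le> be" "be \<le> n" "al < be" using ab_range by auto
  have z: "0 \<in> L0" "n+1 \<in> L0" unfolding Lset_def by auto
  obtain p where p: "p \<in> L0" "p < al" "\<And>c. c \<in> L0 \<Longrightarrow> c < al \<Longrightarrow> c \<le> p"
    using nbr_lo[OF z(1), of al] abr by auto
  obtain q where q: "q \<in> L0" "be < q" "\<And>c. c \<in> L0 \<Longrightarrow> be < c \<Longrightarrow> q \<le> c"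
    using nbr_hi[OF z(2), of be] abr by auto
  have qr: "q \<le> n+1" using q(3)[OF z(2)] abr by simp
  have nP: "al \<notin> P" "be \<notin> P" using ab_notP by auto
  have memb: "\<And>Q. al \<in> Lset n U D Q \<longleftrightarrow> (al \<in> D \<and> al \<notin> Q) \<or> (al \<in> U \<and> al \<in> Q)"
     "\<And>Q. be \<in> Lset n U D Q \<longleftrightarrow> (be \<in> D \<and> be \<notin> Q) \<or> (be \<in> U \<and> be \<in> Q)"
    using Lset_mem abr by auto
  have types: "al \<in> U \<longleftrightarrow> al \<notin> D" "be \<in> U \<longleftrightarrow> be \<notin> D" using mem_UD abr by auto
  define sp where "sp S = (if al \<in> S then al else p, if be \<in> S then be else q)" for S :: "nat set"
  have sp1: "sp S \<in> path_edges S" if ag: "\<And>c. c \<noteq> al \<Longrightarrow> c \<noteq> be \<Longrightarrow> c \<in> S \<longleftrightarrow> c \<in> L0" for S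
  proof -
    have pS: "p \<in> S" using ag[of p] p abr by auto
    have qS: "q \<in> S" using ag[of q] q abr by auto
    have nb: "\<not> (fst (sp S) < c \<and> c < snd (sp S))" if c: "c \<in> S" for c
    proof
      assume cc: "fst (sp S) < c \<and> c < snd (sp S)"
      have pc: "p < c" "c < q" using cc p(2) q(2) abr unfolding sp_def by (auto split: if_splits)
      show False
      proof (cases "c = al \<or> c = be")
        case True
        thus False using cc c unfolding sp_def by (auto split: if_splits)
      next
        case False
        hence cL: "c \<in> L0" using ag c by auto
        consider "c < al" | "al < c \<and> c < be" | "be < c" using False by linarith
        thus False
        proof cases
          case 1 thus False using p(3)[OF cL] pc by auto
        next
          case 2 thus False using noM cL by blast
        next
          case 3 thus False using q(3)[OF cL] pc by auto
        qed
      qed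
    qed
    have "fst (sp S) \<in> S" "snd (sp S) \<in> S" "fst (sp S) < snd (sp S)"
      using pS qS p(2) q(2) abr unfolding sp_def by auto
    thus ?thesis using nb unfolding path_edges_def by (cases "sp S") auto
  qed
  have sp2: "(u,w) = sp S" if ag: "\<And>c. c \<noteq> al \<Longrightarrow> c \<noteq> be \<Longrightarrow> c \<in> S \<longleftrightarrow> c \<in> L0"
    and e: "(u,w) \<in> path_edges S" and uw: "u \<le> al" "be \<le> w" for S u w
  proof -
    have pS: "p \<in> S" using ag[of p] p abr by auto
    have qS: "q \<in> S" using ag[of q] q abr by auto
    have e': "u \<in> S" "w \<in> S" "\<And>c. c \<in> S \<Longrightarrow> \<not> (u < c \<and> c < w)" using e unfolding PE_iff by auto
    have "u = (if al \<in> S then al else p)"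
    proof (cases "al \<in> S")
      case True
      thus ?thesis using e'(3)[OF True] uw abr by auto
    next
      case False
      hence "u \<noteq> al" using e' by auto
      hence ua: "u < al" using uw by simp
      have "\<not> u < p" using e'(3)[OF pS] p(2) ua uw abr by auto
      moreover have "\<not> p < u"
      proof
        assume "p < u"
        moreover have "u \<in> L0" using ag[of u] e'(1) ua abr by auto
        ultimately show False using p(3)[of u] ua by auto
      qed
      ultimately show ?thesis using False by auto
    qed
    moreover have "w = (if be \<in> S then be else q)"
    proof (cases "be \<in> S")
      case True
      thus ?thesis using e'(3)[OF True] uw abr by auto
    next
      case False
      hence "w \<noteq> be" using e' by auto
      hence wb: "be < w" using uw by simp
      have "\<not> q < w" using e'(3)[OF qS] q(2) wb uw abr by auto
      moreover have "\<not> w < q"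
      proof
        assume "w < q"
        moreover have "w \<in> L0" using ag[of w] e'(2) wb abr by auto
        ultimately show False using q(3)[of w] wb by auto
      qed
      ultimately show ?thesis using False by auto
    qed
    ultimately show ?thesis unfolding sp_def by simp
  qed
  define d where "d = sp Lx"
  define d' where "d' = sp Ly"
  have agx: "\<And>c. c \<noteq> al \<Longrightarrow> c \<noteq> be \<Longrightarrow> c \<in> Lx \<longleftrightarrow> c \<in> L0" using agree(1) by blast
  have agy: "\<And>c. c \<noteq> al \<Longrightarrow> c \<noteq> be \<Longrightarrow> c \<in> Ly \<longleftrightarrow> c \<in> L0" using agree(2) by blast
  have dE: "d \<in> path_edges Lx" unfolding d_def using sp1[OF agx] by blast
  have d'E: "d' \<in> path_edges Ly" unfolding d'_def using sp1[OF agy] by blast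
  have PEx: "path_edges Lx \<subseteq> R \<union> {d}"
  proof
    fix e assume e: "e \<in> path_edges Lx"
    obtain u w where uw: "e = (u,w)" by (cases e)
    have e': "(u,w) \<in> path_edges Lx" using e uw by simp
    consider "u \<le> al \<and> be \<le> w" | "w < be" | "al < u" by linarith
    thus "e \<in> R \<union> {d}"
    proof cases
      case 1 thus ?thesis using sp2[OF agx e'] uw unfolding d_def by auto
    next
      case 2
      hence "(u,w) \<in> path_edges L1" using e' agree(3) by (subst PE_agree[symmetric]) auto
      thus ?thesis using R_L1 uw by auto
    next
      case 3
      hence "(u,w) \<in> path_edges L0" using e' agree(1) by (subst PE_agree[symmetric]) auto
      thus ?thesis using R_L0 uw by auto
    qed
  qed
  have PEy: "path_edges Ly \<subseteq> R \<union> {d'}"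
  proof
    fix e assume e: "e \<in> path_edges Ly"
    obtain u w where uw: "e = (u,w)" by (cases e)
    have e': "(u,w) \<in> path_edges Ly" using e uw by simp
    consider "u \<le> al \<and> be \<le> w" | "w < be" | "al < u" by linarith
    thus "e \<in> R \<union> {d'}"
    proof cases
      case 1 thus ?thesis using sp2[OF agy e'] uw unfolding d'_def by auto
    next
      case 2
      hence "(u,w) \<in> path_edges L0" using e' agree(2) by (subst PE_agree[symmetric]) auto
      thus ?thesis using R_L0 uw by auto
    next
      case 3
      hence "(u,w) \<in> path_edges L1" using e' agree(4) by (subst PE_agree[symmetric]) auto
      thus ?thesis using R_L1 uw by auto
    qed
  qed
  have mx: "al \<in> Lx \<longleftrightarrow> al \<in> U" "be \<in> Lx \<longleftrightarrow> be \<in> D" "al \<in> Ly \<longleftrightarrow> al \<in> D" "be \<in> Ly \<longleftrightarrow> be \<in> U"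
    using memb nP ab_ne types by auto
  have dnot: "d \<notin> path_edges (Lset n U D Y)" if Y: "al \<in> Y \<longrightarrow> be \<in> Y" for Y
  proof -
    consider "al \<in> U" "be \<in> U" | "al \<in> D" "be \<in> D" | "al \<in> U" "be \<in> D" | "al \<in> D" "be \<in> U"
      using types by blast
    thus ?thesis
    proof cases
      case 1 hence dd: "d = (al, q)" unfolding d_def sp_def using mx types by auto
      show ?thesis unfolding dd PE_iff using 1 Y memb[of Y] types q(2) abr by auto
    next
      case 2 hence dd: "d = (p, be)" unfolding d_def sp_def using mx types by auto
      show ?thesis unfolding dd PE_iff using 2 Y memb[of Y] types p(2) abr by auto
    next
      case 3 hence dd: "d = (al, be)" unfolding d_def sp_def using mx types by auto
      show ?thesis unfolding dd PE_iff using 3 Y memb[of Y] types by auto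
    next
      case 4 hence dd: "d = (p, q)" unfolding d_def sp_def using mx types by auto
      show ?thesis unfolding dd PE_iff using 4 Y memb[of Y] types p(2) q(2) abr by auto
    qed
  qed
  have d'not: "d' \<notin> path_edges (Lset n U D X)" if X: "be \<in> X \<longrightarrow> al \<in> X" for X
  proof -
    consider "al \<in> U" "be \<in> U" | "al \<in> D" "be \<in> D" | "al \<in> U" "be \<in> D" | "al \<in> D" "be \<in> U"
      using types by blast
    thus ?thesis
    proof cases
      case 1 hence dd: "d' = (p, be)" unfolding d'_def sp_def using mx types by auto
      show ?thesis unfolding dd PE_iff using 1 X memb[of X] types p(2) abr by auto
    next
      case 2 hence dd: "d' = (al, q)" unfolding d'_def sp_def using mx types by auto
      show ?thesis unfolding dd PE_iff using 2 X memb[of X] types q(2) abr by auto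
    next
      case 3 hence dd: "d' = (p, q)" unfolding d'_def sp_def using mx types by auto
      have "al \<in> Lset n U D X \<or> be \<in> Lset n U D X" using 3 X memb[of X] types by auto
      moreover have "p < al" "al < q" "p < be" "be < q" using p(2) q(2) abr by linarith+
      ultimately show ?thesis unfolding dd PE_iff by blast
    next
      case 4 hence dd: "d' = (al, be)" unfolding d'_def sp_def using mx types by auto
      show ?thesis unfolding dd PE_iff using 4 X memb[of X] types by auto
    qed
  qed
  have dy: "d \<notin> Eset n U D y"
  proof
    assume "d \<in> Eset n U D y"
    then obtain i where i: "i \<le> n" "d \<in> path_edges (lam n U D y i)" unfolding Eset_def by blast
    have "d \<in> path_edges (Lset n U D (y ` {1..i}))" using i lam_Lset[OF yp i(1)] by simp
    thus False using dnot[of "y ` {1..i}"] pos_y[OF i(1)] by blast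
  qed
  have d'x: "d' \<notin> Eset n U D x"
  proof
    assume "d' \<in> Eset n U D x"
    then obtain i where i: "i \<le> n" "d' \<in> path_edges (lam n U D x i)" unfolding Eset_def by blast
    have "d' \<in> path_edges (Lset n U D (x ` {1..i}))" using i lam_Lset[OF xp i(1)] by simp
    thus False using d'not[of "x ` {1..i}"] pos_x[OF i(1)] by blast
  qed
  have D1: "Eset n U D x - Eset n U D y = {d}"
    using E_decomp PEx dE dy by auto
  have D2: "Eset n U D y - Eset n U D x = {d'}"
    using E_decomp PEy d'E d'x by auto
  have sl: "slope v d < slope v d'"
  proof -
    consider "al \<in> U" "be \<in> U" | "al \<in> D" "be \<in> D" | "al \<in> U" "be \<in> D" | "al \<in> D" "be \<in> U"
      using types by blast
    thus ?thesis
    proof cases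
      case 1 hence "d = (al, q)" "d' = (p, be)" unfolding d_def d'_def sp_def using mx types by auto
      thus ?thesis using 1 types p(2) q(2) qr abr
        by (simp only:) (rule slope_less, auto simp: above_def)
    next
      case 2 hence "d = (p, be)" "d' = (al, q)" unfolding d_def d'_def sp_def using mx types by auto
      thus ?thesis using 2 types p(2) q(2) qr abr
        by (simp only:) (rule slope_less, auto simp: above_def)
    next
      case 3 hence "d = (al, be)" "d' = (p, q)" unfolding d_def d'_def sp_def using mx types by auto
      thus ?thesis using 3 types p(2) q(2) qr abr
        by (simp only:) (rule slope_less, auto simp: above_def)
    next
      case 4 hence "d = (p, q)" "d' = (al, be)" unfolding d_def d'_def sp_def using mx types by auto
      thus ?thesis using 4 types p(2) q(2) qr abr
        by (simp only:) (rule slope_less, auto simp: above_def)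
    qed
  qed
  show ?thesis using D1 D2 sl by blast
qed

end


context poly begin

abbreviation "PolyE \<equiv> path_edges ({0, n+1} \<union> U) \<union> path_edges ({0, n+1} \<union> D)"

lemma Poly_sub:
  assumes zp: "z permutes {1..n}" shows "PolyE \<subseteq> Eset n U D z"
proof -
  have l0: "lam n U D z 0 = {0, n+1} \<union> D" by auto
  have ln: "lam n U D z n = {0, n+1} \<union> U" using lam_Lset[OF zp, of n] permutes_image[OF zp] Lset_n by simp
  show ?thesis unfolding Eset_def using l0 ln by (auto intro: exI[of _ 0] exI[of _ n])
qed

lemma eta_E: "eta n U D v z = {d \<in> Eset n U D z. is_diagonal n v d}"
  unfolding eta_def Eset_def by auto

lemma nonpoly_diag:
  assumes zp: "z permutes {1..n}" and e: "e \<in> Eset n U D z" "e \<notin> PolyE"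
  shows "is_diagonal n v e"
proof -
  obtain a b where ab: "e = (a,b)" by (cases e)
  have "a < b" "b \<le> n+1" using Eset_range[OF zp e(1)] ab by auto
  thus ?thesis using is_diag e(2) ab by auto
qed

lemma poly_nocross:
  assumes e: "e \<in> PolyE" and ab: "a < b" "b \<le> n+1"
  shows "\<not> cr U (a,b) e"
proof
  assume C: "cr U (a,b) e"
  obtain p q where pq: "e = (p,q)" by (cases e)
  have m: "\<And>z. 0 < z \<Longrightarrow> z \<le> n \<Longrightarrow> (z \<in> D \<longleftrightarrow> z \<notin> U)" using mem_UD by blast
  have nU: "\<And>z. z \<in> U \<Longrightarrow> 0 < z \<and> z \<le> n" and nD: "\<And>z. z \<in> D \<Longrightarrow> 0 < z \<and> z \<le> n"
    using U_range D_range by (simp add: Suc_le_eq)+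
  from e pq consider "(p,q) \<in> path_edges ({0, n+1} \<union> U)" | "(p,q) \<in> path_edges ({0, n+1} \<union> D)" by auto
  thus False
  proof cases
    case 1
    hence pq1: "p \<in> {0,n+1} \<union> U" "q \<in> {0,n+1} \<union> U" "p < q" "\<And>c. c \<in> U \<Longrightarrow> \<not> (p < c \<and> c < q)"
      unfolding PE_iff by auto
    have qn: "q \<le> n+1" using pq1(2) nU[of q] by auto
    from C pq consider
        "a < p" "p < b" "b < q" "b \<in> U \<longleftrightarrow> p \<in> U"
      | "a < p" "p < q" "q < b" "p \<in> U \<longleftrightarrow> q \<notin> U"
      | "p < a" "a < q" "q < b" "q \<in> U \<longleftrightarrow> a \<in> U"
      | "p < a" "a < b" "b < q" "a \<in> U \<longleftrightarrow> b \<notin> U"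
      unfolding cr_def crs_def by auto
    thus False
    proof cases
      case 1
      have "b \<notin> U" using pq1(4)[of b] 1 by linarith
      moreover have "p \<in> U" using pq1(1) 1 ab by auto
      ultimately show False using 1 by simp
    next
      case 2
      have "p \<in> U" "q \<in> U" using pq1(1,2) 2 ab by auto
      thus False using 2 by simp
    next
      case 3
      have "a \<notin> U" using pq1(4)[of a] 3 by linarith
      moreover have "q \<in> U" using pq1(2) 3 ab by auto
      ultimately show False using 3 by simp
    next
      case 4
      have "a \<notin> U" "b \<notin> U" using pq1(4)[of a] pq1(4)[of b] 4 by linarith+
      thus False using 4 by simp
    qed
  next
    case 2
    hence pq1: "p \<in> {0,n+1} \<union> D" "q \<in> {0,n+1} \<union> D" "p < q" "\<And>c. c \<in> D \<Longrightarrow> \<not> (p < c \<and> c < q)"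
      unfolding PE_iff by auto
    have qn: "q \<le> n+1" using pq1(2) nD[of q] by auto
    have pU: "p \<notin> U" "q \<notin> U" using pq1(1,2) UDd notUD by auto
    from C pq consider
        "a < p" "p < b" "b < q" "b \<in> U \<longleftrightarrow> p \<in> U"
      | "a < p" "p < q" "q < b" "p \<in> U \<longleftrightarrow> q \<notin> U"
      | "p < a" "a < q" "q < b" "q \<in> U \<longleftrightarrow> a \<in> U"
      | "p < a" "a < b" "b < q" "a \<in> U \<longleftrightarrow> b \<notin> U"
      unfolding cr_def crs_def by auto
    thus False
    proof cases
      case 1
      have "b \<notin> D" using pq1(4)[of b] 1 by linarith
      hence "b \<in> U" using m[of b] 1 ab qn by auto
      thus False using 1 pU by simp
    next
      case 2 thus False using pU by simp
    next
      case 3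
      have "a \<notin> D" using pq1(4)[of a] 3 by linarith
      hence "a \<in> U" using m[of a] 3 qn by auto
      thus False using 3 pU by simp
    next
      case 4
      have "a \<notin> D" "b \<notin> D" using pq1(4)[of a] pq1(4)[of b] 4 by linarith+
      hence "a \<in> U" "b \<in> U" using m[of a] m[of b] 4 qn by auto
      thus False using 4 by simp
    qed
  qed
qed

lemma triang:
  assumes zp: "z permutes {1..n}"
  shows "triangulation n v (eta n U D v z)"
  unfolding triangulation_def
proof (intro conjI ballI allI impI)
  fix d assume "d \<in> eta n U D v z"
  thus "is_diagonal n v d" unfolding eta_E by auto
next
  fix d e assume d: "d \<in> eta n U D v z" and e: "e \<in> eta n U D v z"
  hence dE: "d \<in> Eset n U D z" and eE: "e \<in> Eset n U D z" unfolding eta_E by auto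
  obtain a b where ab: "d = (a,b)" by (cases d)
  obtain c f where cf: "e = (c,f)" by (cases e)
  have r: "a < b" "b \<le> n+1" "c < f" "f \<le> n+1" using Eset_range[OF zp dE] Eset_range[OF zp eE] ab cf by auto
  show "\<not> diag_cross v d e" using diag_cross_iff[OF r] Eset_noncross[OF zp dE eE] ab cf by simp
next
  fix d assume d: "is_diagonal n v d \<and> d \<notin> eta n U D v z"
  obtain a b where ab: "d = (a,b)" by (cases d)
  have r: "a < b" "b \<le> n+1" using d ab unfolding is_diagonal_def by auto
  have nE: "(a,b) \<notin> Eset n U D z" using d ab unfolding eta_E by auto
  obtain e where e: "e \<in> Eset n U D z" "cr U (a,b) e" using maximal[OF zp r nE] by blast
  have "e \<notin> PolyE" using poly_nocross[OF _ r] e(2) by blast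
  hence eD: "e \<in> eta n U D v z" using nonpoly_diag[OF zp e(1)] e(1) unfolding eta_E by auto
  obtain c f where cf: "e = (c,f)" by (cases e)
  have r2: "c < f" "f \<le> n+1" using Eset_range[OF zp e(1)] cf by auto
  have "diag_cross v d e" using diag_cross_iff[OF r r2] e(2) ab cf by simp
  thus "\<exists>e\<in>eta n U D v z. diag_cross v d e" using eD by blast
qed

end

theorem proposition5p3:
  fixes n :: nat and U D :: "nat set" and v :: "nat \<Rightarrow> real \<times> real"
    and x y :: "nat \<Rightarrow> nat"
  assumes "U \<union> D = {1..n}" and "U \<inter> D = {}"
    and "polygon_Q n U D v"
    and "x permutes {1..n}" and "y permutes {1..n}"
    and "weak_cover n x y"
  shows "(eta n U D v x = eta n U D v y \<longleftrightarrow> move_231 n U y x \<or> move_312 n D y x) \<and>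
         (eta n U D v x \<noteq> eta n U D v y \<longrightarrow>
            diag_flip n v (eta n U D v x) (eta n U D v y) \<and>
            (\<exists>d d'. eta n U D v x - eta n U D v y = {d} \<and> eta n U D v y - eta n U D v x = {d'} \<and>
                    slope v d < slope v d'))"
proof -
  obtain j where j: "1 \<le> j" "j + 1 \<le> n" "x j < x (j+1)" "y = x(j := x (j+1), j+1 := x j)"
    using assms(6) unfolding weak_cover_def by blast
  interpret cover n U D v x y j
    using assms j by unfold_locales auto
  let ?ex = "eta n U D v x" and ?ey = "eta n U D v y"
  let ?Ex = "Eset n U D x" and ?Ey = "Eset n U D y"
  show ?thesis
  proof (cases "\<exists>c. al < c \<and> c < be \<and> c \<in> L0")
    case True
    have "?Ex = ?Ey" using E_eq_move[OF True] .
    hence "?ex = ?ey" unfolding eta_E by simp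
    thus ?thesis using move_iff True by blast
  next
    case False
    obtain d d' where dd: "?Ex - ?Ey = {d}" "?Ey - ?Ex = {d'}" "slope v d < slope v d'"
      using noM_case[OF False] by blast
    have diff: "?ex - ?ey = ?Ex - ?Ey" "?ey - ?ex = ?Ey - ?Ex"
    proof -
      have "e \<notin> PolyE" if "e \<in> ?Ex - ?Ey" for e using that Poly_sub[OF yp] by blast
      hence "is_diagonal n v e" if "e \<in> ?Ex - ?Ey" for e using that nonpoly_diag[OF xp] by blast
      thus "?ex - ?ey = ?Ex - ?Ey" unfolding eta_E by blast
      have "e \<notin> PolyE" if "e \<in> ?Ey - ?Ex" for e using that Poly_sub[OF xp] by blast
      hence "is_diagonal n v e" if "e \<in> ?Ey - ?Ex" for e using that nonpoly_diag[OF yp] by blast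
      thus "?ey - ?ex = ?Ey - ?Ex" unfolding eta_E by blast
    qed
    have d1: "?ex - ?ey = {d}" "?ey - ?ex = {d'}" using diff dd by auto
    have ne: "?ex \<noteq> ?ey" using d1 by auto
    have nmove: "\<not> (move_231 n U y x \<or> move_312 n D y x)" using move_iff False by blast
    have tx: "triangulation n v ?ex" using triang[OF xp] .
    have ty: "triangulation n v ?ey" using triang[OF yp] .
    have dx: "d \<in> ?ex" "d' \<notin> ?ex" "d' \<in> ?ey" using d1 by auto
    have diagd': "is_diagonal n v d'" using ty dx(3) unfolding triangulation_def by blast
    have nc: "\<forall>e \<in> ?ex - {d}. \<not> diag_cross v d' e"
    proof
      fix e assume "e \<in> ?ex - {d}"
      hence "e \<in> ?ey" using d1 by blast
      thus "\<not> diag_cross v d' e" using ty dx(3) unfolding triangulation_def by blast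
    qed
    have ins: "?ey = insert d' (?ex - {d})" using d1 by blast
    have "diag_flip n v ?ex ?ey" unfolding diag_flip_def
      using tx dx diagd' nc ins by blast
    thus ?thesis using ne nmove d1 dd(3) by blast
  qed
qed


end
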